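(* Let $G\le\mathrm{Aut}(\mathcal{T}_d)$ be self-similar. Then $\kappa_k^n(S_n\wr G)\subseteq S_{n+d-1}\wr G$ for all $1\le k\le n$, so the classes $[T_-,g,T_+]$ with $g\in S_n\wr G$ form a subgroup $\mathscr{T}(S_*\wr G)$ of $\mathscr{T}(S_*\wr\mathrm{Aut}(\mathcal{T}_d))$, and the map $[T_-,g,T_+]\mapsto((T_-,g,T_+))$ restricts to an isomorphism $\mathscr{T}(S_*\wr G)\cong V_d(G)$.
   Context: Notation for trees, wreath products, wreath recursion, almost-automorphisms $((T_-,\sigma(f_1,\dots,f_n),T_+))$, $\mathrm{AAut}(\mathcal{T}_d)$, the cloning maps $\kappa_k^n$ and the construction $\mathscr{T}(S_*\wr G)$: Fix $d\ge2$, $X=\{1,\dots,d\}$, $\mathcal{T}_d$ the rooted $d$-ary tree on $X^*$. $S_n\wr G=S_n\ltimes G^n$ with $\sigma(f_1,\dots,f_n)\tau(g_1,\dots,g_n)=\sigma\tau(f_{\tau(1)}g_1,\dots,f_{\tau(n)}g_n)$ (permutations act on the left). Each $f\in\mathrm{Aut}(\mathcal{T}_d)$ has wreath recursion $f=\rho(f)(f_1,\dots,f_d)$ with $f(xw)=\rho(f)(x)f_x(w)$; $G$ is self-similar if all $f_x$ lie in $G$ for all $f\in G$, $x\in X$. For finite rooted complete subtrees $T_\pm$ with $n$ leaves ($u_i$ leaves of $T_-$, $v_i$ of $T_+$, ordered left to right), $((T_-,\sigma(f_1,\dots,f_n),T_+))$ is the homeomorphism of $\partial\mathcal{T}_d$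 with $v_iw\mapsto u_{\sigma(i)}f_i(w)$. $V_d(G)$ is the subgroup of $\mathrm{AAut}(\mathcal{T}_d)$ of all such homeomorphisms with all $f_i\in G$. The cloning map is $(\sigma(f_1,\dots,f_n))\kappa_k^n=(\sigma)\varsigma_k^n\rho(f_k)^{(k)}(f_1,\dots,f_{k-1},f_k^1,\dots,f_k^d,f_{k+1},\dots,f_n)$ where $f_k=\rho(f_k)(f_k^1,\dots,f_k^d)$, $\tau^{(k)}\in S_{n+d-1}$ acts as $k+j-1\mapsto k+\tau(j)-1$ on $\{k,\dots,k+d-1\}$ and trivially elsewhere, and $(\sigma)\varsigma_k^n\in S_{n+d-1}$ is the permutation obtained from $\sigma$ by replacing the point $k$ of the domain by the block $k,\dots,k+d-1$ and the point $\sigma(k)$ of the range by the block $\sigma(k),\dots,\sigma(k)+d-1$, mapping the block order-preservingly ($k+j\mapsto\sigma(k)+j$) and shifting other points to preserve their relative order. $\mathscr{T}(S_*\wr G)$ is the set of triples $(T_-,g,T_+)$ ($T_\pm$ with $n$ leaves, $g\in S_n\wr G$) modulo the equivalence generated by expansions $(T_-,g,T_+)\to(T_-',(g)\kappa_k^n,T_+')$ ($T_+'$: $d$-caret added at $k$th leaf of $T_+$; $T_-'$: $d$-caret added at $\rho_n(g)(k)$th leaf of $T_-$, where $\rho_n(\sigma(\vec g))=\sigma$), with product $[T_-,f,T_+][T_+,g,U_+]=[T_-,fg,U_+]$. *)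

theory Defs
  imports "HOL-Library.List_Lexorder" "HOL-Combinatorics.Permutations" "HOL-Algebra.Group"
begin

text \<open>Vertices of T_d are the words over X = {1..d}, represented as nat lists.\<close>
type_synonym word = "nat list"
type_synonym autf = "word \<Rightarrow> word"

definition words :: "nat \<Rightarrow> word set" where
  "words d = {w. set w \<subseteq> {1..d}}"

text \<open>Automorphisms of T_d: length- and prefix-preserving bijections of X*,
  extended by the identity outside X* (so that equality is extensional).\<close>
definition AutSet :: "nat \<Rightarrow> autf set" where
  "AutSet d = {f. bij_betw f (words d) (words d)
                \<and> (\<forall>w\<in>words d. length (f w) = length w)
                \<and> (\<forall>w\<in>words d. \<forall>v\<in>words d. take (length w) (f (w @ v)) = f w)
                \<and> (\<forall>w. w \<notin> words d \<longrightarrow> f w = w)}"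

definition AutGrp :: "nat \<Rightarrow> autf monoid" where
  "AutGrp d = \<lparr>carrier = AutSet d, mult = (\<circ>), one = id\<rparr>"

text \<open>Wreath recursion f = rho(f)(f_1,...,f_d), with f(xw) = rho(f)(x) f_x(w).\<close>
definition rootperm :: "nat \<Rightarrow> autf \<Rightarrow> nat \<Rightarrow> nat" where
  "rootperm d f x = (if x \<in> {1..d} then hd (f [x]) else x)"

definition sect :: "nat \<Rightarrow> autf \<Rightarrow> nat \<Rightarrow> autf" where
  "sect d f x = (\<lambda>w. if w \<in> words d then tl (f (x # w)) else w)"

definition self_similar :: "nat \<Rightarrow> autf set \<Rightarrow> bool" where
  "self_similar d G \<longleftrightarrow> (\<forall>f\<in>G. \<forall>x\<in>{1..d}. sect d f x \<in> G)"

text \<open>An element sigma(f_1,...,f_n) is a pair (sigma, fs), sigma a permutation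
  of {1..n} (identity elsewhere), fs i in G for i in {1..n}, fs i = id elsewhere.\<close>
type_synonym wel = "(nat \<Rightarrow> nat) \<times> (nat \<Rightarrow> autf)"

definition wr :: "nat \<Rightarrow> autf set \<Rightarrow> wel set" where
  "wr n G = {(\<sigma>, fs). \<sigma> permutes {1..n} \<and> (\<forall>i\<in>{1..n}. fs i \<in> G)
                      \<and> (\<forall>i. i \<notin> {1..n} \<longrightarrow> fs i = id)}"

definition wmult :: "wel \<Rightarrow> wel \<Rightarrow> wel" where
  "wmult a b = (case a of (\<sigma>, fs) \<Rightarrow> case b of (\<tau>, gs) \<Rightarrow>
                 (\<sigma> \<circ> \<tau>, \<lambda>i. fs (\<tau> i) \<circ> gs i))"

definition varsigma :: "nat \<Rightarrow> nat \<Rightarrow> nat \<Rightarrow> (nat \<Rightarrow> nat) \<Rightarrow> nat \<Rightarrow> nat" where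
  "varsigma d n k \<sigma> i =
     (let sh = (\<lambda>m. if m < \<sigma> k then m else m + d - 1) in
      if 1 \<le> i \<and> i < k then sh (\<sigma> i)
      else if k \<le> i \<and> i < k + d then \<sigma> k + (i - k)
      else if k + d \<le> i \<and> i \<le> n + d - 1 then sh (\<sigma> (i - d + 1))
      else i)"

definition shiftperm :: "nat \<Rightarrow> nat \<Rightarrow> (nat \<Rightarrow> nat) \<Rightarrow> nat \<Rightarrow> nat" where
  "shiftperm d k \<tau> i = (if k \<le> i \<and> i < k + d then k + \<tau> (i - k + 1) - 1 else i)"

definition clone :: "nat \<Rightarrow> nat \<Rightarrow> nat \<Rightarrow> wel \<Rightarrow> wel" where
  "clone d n k g = (case g of (\<sigma>, fs) \<Rightarrow>
     (varsigma d n k \<sigma> \<circ> shiftperm d k (rootperm d (fs k)),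
      \<lambda>i. if 1 \<le> i \<and> i < k then fs i
           else if k \<le> i \<and> i < k + d then sect d (fs k) (i - k + 1)
           else if k + d \<le> i \<and> i \<le> n + d - 1 then fs (i - d + 1)
           else id))"

type_synonym tree = "word set"

definition is_tree :: "nat \<Rightarrow> tree \<Rightarrow> bool" where
  "is_tree d T \<longleftrightarrow> finite T \<and> [] \<in> T \<and> T \<subseteq> words d
     \<and> (\<forall>w x. w @ [x] \<in> T \<longrightarrow> w \<in> T)
     \<and> (\<forall>w x. w @ [x] \<in> T \<longrightarrow> (\<forall>y\<in>{1..d}. w @ [y] \<in> T))"

definition leaves :: "tree \<Rightarrow> word set" where
  "leaves T = {w\<in>T. \<forall>x. w @ [x] \<notin> T}"

definition nleaves :: "tree \<Rightarrow> nat" where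
  "nleaves T = card (leaves T)"

text \<open>The i-th leaf (1-based) in left-to-right (lexicographic) order.\<close>
definition leaf :: "tree \<Rightarrow> nat \<Rightarrow> word" where
  "leaf T i = sorted_list_of_set (leaves T) ! (i - 1)"

definition add_caret :: "nat \<Rightarrow> tree \<Rightarrow> nat \<Rightarrow> tree" where
  "add_caret d T k = T \<union> {leaf T k @ [x] | x. x \<in> {1..d}}"

type_synonym bseq = "nat \<Rightarrow> nat"

definition bd :: "nat \<Rightarrow> bseq set" where
  "bd d = {\<xi>. \<forall>i. \<xi> i \<in> {1..d}}"

definition aut_bd :: "autf \<Rightarrow> bseq \<Rightarrow> bseq" where
  "aut_bd f \<xi> = (\<lambda>i. f (map \<xi> [0..<Suc i]) ! i)"

definition bprefix :: "word \<Rightarrow> bseq \<Rightarrow> bool" where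
  "bprefix u \<xi> \<longleftrightarrow> (\<forall>j<length u. \<xi> j = u ! j)"

definition bconc :: "word \<Rightarrow> bseq \<Rightarrow> bseq" where
  "bconc u \<eta> = (\<lambda>j. if j < length u then u ! j else \<eta> (j - length u))"

type_synonym triple = "tree \<times> wel \<times> tree"

text \<open>((T_-, sigma(f_1..f_n), T_+)) : v_i w |-> u_{sigma i} f_i(w); identity off the boundary.\<close>
definition aa :: "nat \<Rightarrow> triple \<Rightarrow> bseq \<Rightarrow> bseq" where
  "aa d t = (case t of (Tm, (\<sigma>, fs), Tp) \<Rightarrow> (\<lambda>\<xi>.
     if \<xi> \<in> bd d then
       (let i = (THE i. i \<in> {1..nleaves Tp} \<and> bprefix (leaf Tp i) \<xi>);
            v = leaf Tp i
        in bconc (leaf Tm (\<sigma> i)) (aut_bd (fs i) (\<lambda>j. \<xi> (j + length v))))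
     else \<xi>))"

definition trip :: "nat \<Rightarrow> autf set \<Rightarrow> triple set" where
  "trip d G = {(Tm, g, Tp). is_tree d Tm \<and> is_tree d Tp \<and> nleaves Tm = nleaves Tp
                            \<and> g \<in> wr (nleaves Tp) G}"

definition Vd :: "nat \<Rightarrow> autf set \<Rightarrow> (bseq \<Rightarrow> bseq) set" where
  "Vd d G = aa d ` trip d G"

definition VGrp :: "nat \<Rightarrow> autf set \<Rightarrow> (bseq \<Rightarrow> bseq) monoid" where
  "VGrp d G = \<lparr>carrier = Vd d G, mult = (\<circ>), one = id\<rparr>"

definition Texp :: "nat \<Rightarrow> (triple \<times> triple) set" where
  "Texp d = {((Tm, g, Tp), (add_caret d Tm (fst g k), clone d (nleaves Tp) k g, add_caret d Tp k))
              | Tm g Tp k. (Tm, g, Tp) \<in> trip d (AutSet d) \<and> 1 \<le> k \<and> k \<le> nleaves Tp}"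

definition Teq :: "nat \<Rightarrow> (triple \<times> triple) set" where
  "Teq d = (Texp d \<union> (Texp d)\<inverse>)\<^sup>*"

definition tmult :: "nat \<Rightarrow> triple set \<Rightarrow> triple set \<Rightarrow> triple set" where
  "tmult d A B = \<Union>{Teq d `` {(Tm, wmult f g, Up)} | Tm f Tp g Up.
                      (Tm, f, Tp) \<in> A \<and> (Tp, g, Up) \<in> B}"

definition tone :: triple where
  "tone = ({[]}, (id, \<lambda>_. id), {[]})"

definition TGrp :: "nat \<Rightarrow> triple set monoid" where
  "TGrp d = \<lparr>carrier = trip d (AutSet d) // Teq d, mult = tmult d, one = Teq d `` {tone}\<rparr>"

definition TS :: "nat \<Rightarrow> autf set \<Rightarrow> triple set set" where
  "TS d G = (\<lambda>x. Teq d `` {x}) ` trip d G"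

definition Phi :: "nat \<Rightarrow> triple set \<Rightarrow> bseq \<Rightarrow> bseq" where
  "Phi d A = aa d (SOME t. t \<in> A)"

end

theory Submission
  imports Defs
begin

lemma words_simps[simp]:
  "[] \<in> words d"
  "(x # w \<in> words d) = (x \<in> {1..d} \<and> w \<in> words d)"
  "(w @ v \<in> words d) = (w \<in> words d \<and> v \<in> words d)"
  by (auto simp: words_def)

lemma AutSetD:
  assumes "f \<in> AutSet d"
  shows "bij_betw f (words d) (words d)" "\<And>w. w \<in> words d \<Longrightarrow> length (f w) = length w"
    "\<And>w v. w \<in> words d \<Longrightarrow> v \<in> words d \<Longrightarrow> take (length w) (f (w @ v)) = f w"
    "\<And>w. w \<notin> words d \<Longrightarrow> f w = w"
  using assms by (auto simp: AutSet_def)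

lemma Aut_words: "f \<in> AutSet d \<Longrightarrow> w \<in> words d \<Longrightarrow> f w \<in> words d"
  using AutSetD(1) bij_betwE by blast

lemma Aut_inj: "f \<in> AutSet d \<Longrightarrow> w \<in> words d \<Longrightarrow> v \<in> words d \<Longrightarrow> f w = f v \<Longrightarrow> w = v"
  using AutSetD(1) by (metis bij_betw_imp_inj_on inj_onD)

lemma words_nth: "w \<in> words d \<Longrightarrow> i < length w \<Longrightarrow> w ! i \<in> {1..d}"
proof -
  assume "w \<in> words d" "i < length w"
  moreover have "w ! i \<in> set w" using \<open>i < length w\<close> by (rule nth_mem)
  ultimately show ?thesis unfolding words_def mem_Collect_eq by blast
qed

lemma map_bd_words: "\<eta> \<in> bd d \<Longrightarrow> map \<eta> xs \<in> words d"
  by (auto simp: words_def bd_def)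

lemma Aut_map_bd:
  assumes f: "f \<in> AutSet d" and e: "\<eta> \<in> bd d"
  shows "f (map \<eta> [0..<m]) = map (aut_bd f \<eta>) [0..<m]"
proof (induction m)
  case 0
  then show ?case using AutSetD(2)[OF f, of "[]"] by simp
next
  case (Suc m)
  let ?w = "map \<eta> [0..<m]"
  have w: "?w \<in> words d" "[\<eta> m] \<in> words d" using map_bd_words[OF e, of "[0..<m]"] map_bd_words[OF e, of "[m]"] by auto
  have eq: "map \<eta> [0..<Suc m] = ?w @ [\<eta> m]" by simp
  have len: "length (f (?w @ [\<eta> m])) = Suc m" using AutSetD(2)[OF f, of "?w @ [\<eta> m]"] w by simp
  have tk: "take m (f (?w @ [\<eta> m])) = f ?w" using AutSetD(3)[OF f w] by simp
  have "f (?w @ [\<eta> m]) = take m (f (?w @ [\<eta> m])) @ [f (?w @ [\<eta> m]) ! m]"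
    using len by (metis lessI take_Suc_conv_app_nth take_all_iff order_refl)
  also have "\<dots> = map (aut_bd f \<eta>) [0..<m] @ [aut_bd f \<eta> m]"
    using tk Suc.IH by (simp add: aut_bd_def)
  finally show ?case using eq by simp
qed

lemma aut_bd_bd:
  assumes f: "f \<in> AutSet d" and e: "\<eta> \<in> bd d"
  shows "aut_bd f \<eta> \<in> bd d"
proof -
  have "aut_bd f \<eta> i \<in> {1..d}" for i
  proof -
    have w: "f (map \<eta> [0..<Suc i]) \<in> words d" using Aut_words[OF f map_bd_words[OF e]] .
    have l: "length (f (map \<eta> [0..<Suc i])) = Suc i" using AutSetD(2)[OF f map_bd_words[OF e, of "[0..<Suc i]"]] by (simp del: upt_Suc)
    show ?thesis using words_nth[OF w] l unfolding aut_bd_def by (simp del: upt_Suc)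
  qed
  then show ?thesis by (auto simp: bd_def)
qed

lemma aut_bd_comp:
  assumes f: "f \<in> AutSet d" and g: "g \<in> AutSet d" and e: "\<eta> \<in> bd d"
  shows "aut_bd f (aut_bd g \<eta>) = aut_bd (f \<circ> g) \<eta>"
proof
  fix i
  have "map (aut_bd g \<eta>) [0..<Suc i] = g (map \<eta> [0..<Suc i])" by (rule Aut_map_bd[OF g e, symmetric])
  then show "aut_bd f (aut_bd g \<eta>) i = aut_bd (f \<circ> g) \<eta> i" by (simp add: aut_bd_def)
qed

lemma aut_bd_id[simp]: "aut_bd id \<eta> = \<eta>"
  by (auto simp: aut_bd_def simp del: upt_Suc)

lemma aut_bd_inj:
  assumes d: "d \<ge> 1" and f: "f \<in> AutSet d" and g: "g \<in> AutSet d"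
    and eq: "\<And>\<eta>. \<eta> \<in> bd d \<Longrightarrow> aut_bd f \<eta> = aut_bd g \<eta>"
  shows "f = g"
proof
  fix w
  show "f w = g w"
  proof (cases "w \<in> words d")
    case True
    define \<eta> where "\<eta> = (\<lambda>j. if j < length w then w ! j else 1)"
    have "w ! j \<in> {1..d}" if "j < length w" for j using True that by (rule words_nth)
    then have e: "\<eta> \<in> bd d" using d unfolding \<eta>_def bd_def by auto
    have m: "map \<eta> [0..<length w] = w" unfolding \<eta>_def by (rule nth_equalityI) auto
    show ?thesis using Aut_map_bd[OF f e, of "length w"] Aut_map_bd[OF g e, of "length w"] eq[OF e] m by simp
  next
    case False
    then show ?thesis using AutSetD(4)[OF f] AutSetD(4)[OF g] by simp
  qed
qed

lemma map_bconc1: "map (bconc [j] \<eta>) [0..<Suc i] = j # map \<eta> [0..<i]"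
  by (induction i) (auto simp: bconc_def)

lemma Aut_cons:
  assumes f: "f \<in> AutSet d" and x: "x \<in> {1..d}" and w: "w \<in> words d"
  shows "f (x # w) = rootperm d f x # sect d f x w"
proof -
  have xw: "[x] \<in> words d" using x by simp
  have l: "length (f (x # w)) = Suc (length w)" using AutSetD(2)[OF f, of "x#w"] x w by simp
  have t: "take 1 (f ([x] @ w)) = f [x]" using AutSetD(3)[OF f xw w] by simp
  obtain a r where ar: "f (x # w) = a # r" using l by (cases "f (x#w)") auto
  have "f [x] = [a]" using t ar by simp
  then show ?thesis using ar x w by (simp add: rootperm_def sect_def)
qed

lemma aut_bd_cons:
  assumes f: "f \<in> AutSet d" and x: "x \<in> {1..d}" and e: "\<eta> \<in> bd d"
  shows "aut_bd f (bconc [x] \<eta>) = bconc [rootperm d f x] (aut_bd (sect d f x) \<eta>)"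
proof
  fix i
  show "aut_bd f (bconc [x] \<eta>) i = bconc [rootperm d f x] (aut_bd (sect d f x) \<eta>) i"
  proof (cases i)
    case 0
    then show ?thesis using Aut_cons[OF f x, of "[]"] by (simp add: aut_bd_def bconc_def)
  next
    case (Suc m)
    have "f (x # map \<eta> [0..<Suc m]) = rootperm d f x # sect d f x (map \<eta> [0..<Suc m])"
      using Aut_cons[OF f x map_bd_words[OF e]] .
    then show ?thesis unfolding aut_bd_def using Suc by (simp only: map_bconc1) (simp add: bconc_def)
  qed
qed

lemma id_Aut: "id \<in> AutSet d"
  by (auto simp: AutSet_def)

lemma comp_Aut:
  assumes f: "f \<in> AutSet d" and g: "g \<in> AutSet d"
  shows "f \<circ> g \<in> AutSet d"
proof -
  have b: "bij_betw (f \<circ> g) (words d) (words d)" using AutSetD(1)[OF f] AutSetD(1)[OF g] bij_betw_trans by blast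
  have l: "\<forall>w\<in>words d. length ((f \<circ> g) w) = length w" using AutSetD(2)[OF f] AutSetD(2)[OF g] Aut_words[OF g] by simp
  have p: "take (length w) ((f \<circ> g) (w @ v)) = (f \<circ> g) w" if w: "w \<in> words d" and v: "v \<in> words d" for w v
  proof -
    have gw: "g (w @ v) \<in> words d" using Aut_words[OF g] w v by simp
    have "g (w @ v) = g w @ drop (length w) (g (w @ v))"
      using AutSetD(3)[OF g w v] by (metis append_take_drop_id)
    moreover have "drop (length w) (g (w @ v)) \<in> words d" using gw by (auto simp: words_def dest: in_set_dropD)
    moreover have "length (g w) = length w" using AutSetD(2)[OF g w] .
    ultimately show ?thesis using AutSetD(3)[OF f Aut_words[OF g w], of "drop (length w) (g (w @ v))"] by simp
  qed
  have o: "\<forall>w. w \<notin> words d \<longrightarrow> (f \<circ> g) w = w" using AutSetD(4)[OF f] AutSetD(4)[OF g] by simp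
  show ?thesis using b l p o by (auto simp: AutSet_def)
qed

definition autinv :: "nat \<Rightarrow> autf \<Rightarrow> autf" where
  "autinv d f = (\<lambda>w. if w \<in> words d then inv_into (words d) f w else w)"

lemma autinv:
  assumes f: "f \<in> AutSet d"
  shows "autinv d f \<in> AutSet d" "autinv d f \<circ> f = id" "f \<circ> autinv d f = id"
proof -
  have bf: "bij_betw f (words d) (words d)" using AutSetD(1)[OF f] .
  have bi: "bij_betw (inv_into (words d) f) (words d) (words d)" using bij_betw_inv_into[OF bf] .
  have bi2: "bij_betw (autinv d f) (words d) (words d)"
    using bi by (rule bij_betw_cong[THEN iffD1, rotated]) (simp add: autinv_def)
  have fi: "f (autinv d f w) = w" for w
    by (cases "w \<in> words d") (auto simp: autinv_def bij_betw_inv_into_right[OF bf] AutSetD(4)[OF f])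
  have iff: "autinv d f (f w) = w" for w
  proof (cases "w \<in> words d")
    case True then show ?thesis using Aut_words[OF f True] bij_betw_inv_into_left[OF bf True] by (simp add: autinv_def)
  next
    case False then show ?thesis by (simp add: autinv_def AutSetD(4)[OF f])
  qed
  have iw: "w \<in> words d \<Longrightarrow> autinv d f w \<in> words d" for w using bi2 bij_betwE by blast
  have il: "length (autinv d f w) = length w" if "w \<in> words d" for w
    using AutSetD(2)[OF f iw[OF that]] fi[of w] by simp
  have ip: "take (length w) (autinv d f (w @ v)) = autinv d f w" if w: "w \<in> words d" and v: "v \<in> words d" for w v
  proof -
    let ?a = "autinv d f (w @ v)"
    have aw: "?a \<in> words d" using iw w v by simp
    have al: "length ?a = length w + length v" using il[of "w@v"] w v by simp
    let ?b = "take (length w) ?a" let ?c = "drop (length w) ?a"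
    have bw: "?b \<in> words d" "?c \<in> words d" using aw by (auto simp: words_def dest: in_set_takeD in_set_dropD)
    have "take (length ?b) (f (?b @ ?c)) = f ?b" using AutSetD(3)[OF f bw] .
    moreover have "?b @ ?c = ?a" by simp
    moreover have "length ?b = length w" using al by simp
    ultimately have "f ?b = w" using fi[of "w@v"] by simp
    then show ?thesis using iff[of ?b] by simp
  qed
  have io: "\<forall>w. w \<notin> words d \<longrightarrow> autinv d f w = w" by (simp add: autinv_def)
  show "autinv d f \<in> AutSet d" using bi2 il ip io by (auto simp: AutSet_def)
  show "autinv d f \<circ> f = id" using iff by auto
  show "f \<circ> autinv d f = id" using fi by auto
qed

lemma AutGrp_group: "group (AutGrp d)"
proof (rule groupI)
  show "\<exists>y\<in>carrier (AutGrp d). y \<otimes>\<^bsub>AutGrp d\<^esub> x = \<one>\<^bsub>AutGrp d\<^esub>" if "x \<in> carrier (AutGrp d)" for x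
    using autinv[of x d] that by (auto simp: AutGrp_def)
qed (auto simp: AutGrp_def id_Aut comp_Aut comp_assoc)

lemma AutGrp_inv: "f \<in> AutSet d \<Longrightarrow> inv\<^bsub>AutGrp d\<^esub> f = autinv d f"
  using group.inv_equality[OF AutGrp_group, where x=f and y="autinv d f"] autinv[of f d] by (simp add: AutGrp_def)

lemma rootperm_permutes:
  assumes f: "f \<in> AutSet d"
  shows "rootperm d f permutes {1..d}"
proof -
  have one: "f [x] = [rootperm d f x]" if "x \<in> {1..d}" for x
    using AutSetD(2)[OF f, of "[x]"] that by (cases "f [x]") (auto simp: rootperm_def)
  have img: "rootperm d f x \<in> {1..d}" if "x \<in> {1..d}" for x
    using Aut_words[OF f, of "[x]"] one[OF that] that by simp
  have inj: "inj_on (rootperm d f) {1..d}"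
  proof (rule inj_onI)
    fix x y assume x: "x \<in> {1..d}" and y: "y \<in> {1..d}" and e: "rootperm d f x = rootperm d f y"
    have "f [x] = f [y]" using one[OF x] one[OF y] e by simp
    then show "x = y" using Aut_inj[OF f, of "[x]" "[y]"] x y by simp
  qed
  have "rootperm d f ` {1..d} = {1..d}"
    by (rule endo_inj_surj[OF _ _ inj]) (use img in auto)
  then have "bij_betw (rootperm d f) {1..d} {1..d}" using inj by (simp add: bij_betw_def)
  then show ?thesis by (rule bij_imp_permutes) (auto simp: rootperm_def)
qed

lemma sect_Aut:
  assumes f: "f \<in> AutSet d" and x: "x \<in> {1..d}"
  shows "sect d f x \<in> AutSet d"
proof -
  let ?s = "sect d f x"
  have c: "f (x # w) = rootperm d f x # ?s w" if "w \<in> words d" for w using Aut_cons[OF f x that] .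
  have sw: "?s w \<in> words d" if "w \<in> words d" for w
    using Aut_words[OF f, of "x#w"] c[OF that] x that by simp
  have sl: "length (?s w) = length w" if "w \<in> words d" for w
    using AutSetD(2)[OF f, of "x#w"] c[OF that] x that by simp
  have sp: "take (length w) (?s (w @ v)) = ?s w" if w: "w \<in> words d" and v: "v \<in> words d" for w v
  proof -
    have "take (length (x#w)) (f ((x#w) @ v)) = f (x#w)" using AutSetD(3)[OF f, of "x#w" v] x w v by simp
    then show ?thesis using c[of "w@v"] c[OF w] w v by simp
  qed
  have inj: "inj_on ?s (words d)"
  proof (rule inj_onI)
    fix a b assume a: "a \<in> words d" and b: "b \<in> words d" and e: "?s a = ?s b"
    have "f (x#a) = f (x#b)" using c[OF a] c[OF b] e by simp
    then show "a = b" using Aut_inj[OF f, of "x#a" "x#b"] a b x by simp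
  qed
  have surj: "?s ` words d = words d"
  proof
    show "?s ` words d \<subseteq> words d" using sw by auto
    show "words d \<subseteq> ?s ` words d"
    proof
      fix v assume v: "v \<in> words d"
      have rx: "rootperm d f x \<in> {1..d}" using permutes_in_image[OF rootperm_permutes[OF f]] x by blast
      let ?a = "autinv d f (rootperm d f x # v)"
      have aw: "?a \<in> words d" using Aut_words[OF autinv(1)[OF f]] rx v by simp
      have al: "length ?a = Suc (length v)" using AutSetD(2)[OF autinv(1)[OF f]] rx v by simp
      have fa: "f ?a = rootperm d f x # v" using autinv(3)[OF f] by (metis comp_apply id_apply)
      obtain y w where yw: "?a = y # w" using al by (cases ?a) auto
      have y: "y \<in> {1..d}" and w: "w \<in> words d" using aw yw by auto
      have "f (y # w) = rootperm d f y # sect d f y w" using Aut_cons[OF f y w] .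
      then have "rootperm d f y = rootperm d f x" "sect d f y w = v" using fa yw by auto
      moreover have "y = x" using calculation(1) rootperm_permutes[OF f] y x
        by (metis permutes_inj inj_eq)
      ultimately show "v \<in> ?s ` words d" using w by auto
    qed
  qed
  have o: "\<forall>w. w \<notin> words d \<longrightarrow> ?s w = w" by (simp add: sect_def)
  show ?thesis using inj surj sw sl sp o by (auto simp: AutSet_def bij_betw_def)
qed

lemma self_similar_Aut: "self_similar d (AutSet d)"
  by (simp add: self_similar_def sect_Aut)


lemma tree_prefix: "is_tree d T \<Longrightarrow> w @ v \<in> T \<Longrightarrow> w \<in> T"
proof (induction v rule: rev_induct)
  case Nil then show ?case by simp
next
  case (snoc x xs)
  have "(w @ xs) @ [x] \<in> T" using snoc.prems by simp
  then have "w @ xs \<in> T" using snoc.prems(1) unfolding is_tree_def by blast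
  then show ?case using snoc.IH snoc.prems(1) by blast
qed

lemma tree_words: "is_tree d T \<Longrightarrow> w \<in> T \<Longrightarrow> w \<in> words d"
  unfolding is_tree_def by blast

lemma tree_finite: "is_tree d T \<Longrightarrow> finite T"
  unfolding is_tree_def by blast

lemma leaves_sub: "leaves T \<subseteq> T"
  unfolding leaves_def by blast

lemma finite_leaves: "is_tree d T \<Longrightarrow> finite (leaves T)"
  by (rule finite_subset[OF leaves_sub tree_finite])

lemma leaf_antichain: "is_tree d T \<Longrightarrow> u \<in> leaves T \<Longrightarrow> u @ v \<in> T \<Longrightarrow> v = []"
proof (cases v)
  case (Cons c v')
  assume t: "is_tree d T" and u: "u \<in> leaves T" and uv: "u @ v \<in> T"
  have "u @ [c] \<in> T" using tree_prefix[OF t, of "u @ [c]" v'] uv Cons by simp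
  then show ?thesis using u by (simp add: leaves_def)
qed simp

lemma length_le_Max: "is_tree d T \<Longrightarrow> w \<in> T \<Longrightarrow> length w \<le> Max (length ` T)"
  using tree_finite by (simp add: Max_ge)

lemma node_to_leaf: "is_tree d T \<Longrightarrow> w \<in> T \<Longrightarrow> \<exists>v. w @ v \<in> leaves T"
proof (induction "Max (length ` T) - length w" arbitrary: w rule: less_induct)
  case less
  show ?case
  proof (cases "w \<in> leaves T")
    case True then show ?thesis by (metis append_Nil2)
  next
    case False
    then obtain x where x: "w @ [x] \<in> T" using less.prems by (auto simp: leaves_def)
    have "length (w @ [x]) \<le> Max (length ` T)" using length_le_Max[OF less.prems(1) x] .
    then have "Max (length ` T) - length (w @ [x]) < Max (length ` T) - length w" by simp
    then obtain v where "w @ [x] @ v \<in> leaves T" using less.hyps[OF _ less.prems(1) x] by auto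
    then show ?thesis by blast
  qed
qed

lemma tree_eq_leaves:
  assumes T: "is_tree d T" and S: "is_tree d S" and e: "leaves T = leaves S"
  shows "T = S"
proof -
  have "w \<in> S" if h: "w \<in> T" "is_tree d T" "is_tree d S" "leaves T = leaves S" for w T S
  proof -
    obtain v where "w @ v \<in> leaves T" using node_to_leaf[OF h(2) h(1)] by blast
    then have "w @ v \<in> leaves S" using h(4) by simp
    then have "w @ v \<in> S" using leaves_sub[of S] by blast
    then show ?thesis using tree_prefix[OF h(3)] by blast
  qed
  note a = this
  show ?thesis
  proof (rule equalityI; rule subsetI)
    fix w assume "w \<in> T" then show "w \<in> S" using a[of w T S] T S e by simp
  next
    fix w assume "w \<in> S" then show "w \<in> T" using a[of w S T] T S e by simp
  qed
qed

section \<open>boundary\<close>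

lemma bprefix_map: "bprefix u \<xi> \<longleftrightarrow> u = map \<xi> [0..<length u]"
  unfolding bprefix_def list_eq_iff_nth_eq by auto

lemma bprefix_bconc: "bprefix u (bconc u \<eta>)"
  by (simp add: bprefix_def bconc_def)

lemma bconc_shift[simp]: "(\<lambda>j. bconc u \<eta> (j + length u)) = \<eta>"
  by (simp add: bconc_def)

lemma bconc_decomp: "bprefix u \<xi> \<Longrightarrow> bconc u (\<lambda>j. \<xi> (j + length u)) = \<xi>"
  by (auto simp: bprefix_def bconc_def)

lemma bconc_bd: "u \<in> words d \<Longrightarrow> \<eta> \<in> bd d \<Longrightarrow> bconc u \<eta> \<in> bd d"
  unfolding bd_def bconc_def using words_nth by auto

lemma shift_bd: "\<xi> \<in> bd d \<Longrightarrow> (\<lambda>j. \<xi> (j + m)) \<in> bd d"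
  by (simp add: bd_def)

lemma bconc_append: "bconc (u @ v) \<eta> = bconc u (bconc v \<eta>)"
  by (rule ext) (auto simp: bconc_def nth_append)

lemma bprefix_cases:
  assumes "bprefix u \<xi>" "bprefix v \<xi>" "length u \<le> length v"
  shows "v = u @ map \<xi> [length u..<length v]"
proof -
  have "u = map \<xi> [0..<length u]" "v = map \<xi> [0..<length v]" using assms bprefix_map by blast+
  moreover have "[0..<length v] = [0..<length u] @ [length u..<length v]"
    using assms(3) by (metis le0 upt_add_eq_append le_add_diff_inverse)
  ultimately show ?thesis by (metis map_append)
qed

lemma leaf_bprefix_unique:
  assumes t: "is_tree d T" and u: "u \<in> leaves T" and v: "v \<in> leaves T"
    and pu: "bprefix u \<xi>" and pv: "bprefix v \<xi>"
  shows "u = v"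
proof (cases "length u \<le> length v")
  case True
  then have e: "v = u @ map \<xi> [length u..<length v]" using bprefix_cases pu pv by blast
  have "v \<in> T" using v leaves_sub by blast
  then have "u @ map \<xi> [length u..<length v] \<in> T" using e by simp
  then have "map \<xi> [length u..<length v] = []" by (rule leaf_antichain[OF t u])
  then show ?thesis using e by (metis append_Nil2)
next
  case False
  then have e: "u = v @ map \<xi> [length v..<length u]" using bprefix_cases pu pv by simp
  have "u \<in> T" using u leaves_sub by blast
  then have "v @ map \<xi> [length v..<length u] \<in> T" using e by simp
  then have "map \<xi> [length v..<length u] = []" by (rule leaf_antichain[OF t v])
  then show ?thesis using e by (metis append_Nil2)
qed

lemma leaf_bprefix_exists:
  assumes t: "is_tree d T" and x: "\<xi> \<in> bd d"
  shows "\<exists>u\<in>leaves T. bprefix u \<xi>"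
proof -
  have "map \<xi> [0..<m] \<in> T \<Longrightarrow> \<exists>u\<in>leaves T. bprefix u \<xi>" for m
  proof (induction "Max (length ` T) - m" arbitrary: m rule: less_induct)
    case less
    show ?case
    proof (cases "map \<xi> [0..<m] \<in> leaves T")
      case True
      have "bprefix (map \<xi> [0..<m]) \<xi>" by (simp add: bprefix_def)
      then show ?thesis using True by blast
    next
      case False
      then obtain y where "map \<xi> [0..<m] @ [y] \<in> T" using less.prems by (auto simp: leaves_def)
      moreover have "\<xi> m \<in> {1..d}" using x by (simp add: bd_def)
      moreover have sib: "\<forall>w x. w @ [x] \<in> T \<longrightarrow> (\<forall>y\<in>{1..d}. w @ [y] \<in> T)"
        using t unfolding is_tree_def by blast
      ultimately have "map \<xi> [0..<m] @ [\<xi> m] \<in> T" by blast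
      then have m1: "map \<xi> [0..<Suc m] \<in> T" by simp
      have "Suc m \<le> Max (length ` T)" using length_le_Max[OF t m1] by simp
      then show ?thesis using less.hyps[OF _ m1] by simp
    qed
  qed
  moreover have "map \<xi> [0..<0] \<in> T" using t by (simp add: is_tree_def)
  ultimately show ?thesis by blast
qed

section \<open>leaf indexing\<close>

lemma nleaves_len: "nleaves T = length (sorted_list_of_set (leaves T))"
  by (simp add: nleaves_def)

lemma leaf_in: "is_tree d T \<Longrightarrow> i \<in> {1..nleaves T} \<Longrightarrow> leaf T i \<in> leaves T"
proof -
  assume t: "is_tree d T" and i: "i \<in> {1..nleaves T}"
  let ?L = "sorted_list_of_set (leaves T)"
  have "i - 1 < length ?L" using i by (auto simp: nleaves_def)
  then have "?L ! (i - 1) \<in> set ?L" by (rule nth_mem)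
  then show ?thesis using finite_leaves[OF t] by (simp add: leaf_def)
qed

lemma leaf_inj: "is_tree d T \<Longrightarrow> i \<in> {1..nleaves T} \<Longrightarrow> j \<in> {1..nleaves T} \<Longrightarrow> leaf T i = leaf T j \<Longrightarrow> i = j"
proof -
  assume i: "i \<in> {1..nleaves T}" and j: "j \<in> {1..nleaves T}" and e: "leaf T i = leaf T j"
  let ?L = "sorted_list_of_set (leaves T)"
  have "distinct ?L" by simp
  moreover have "i - 1 < length ?L" "j - 1 < length ?L" using i j by (auto simp: nleaves_def)
  ultimately have "i - 1 = j - 1" using e unfolding leaf_def by (simp add: nth_eq_iff_index_eq)
  moreover have "i \<ge> 1" "j \<ge> 1" using i j by auto
  ultimately show ?thesis by linarith
qed

lemma leaf_surj: "is_tree d T \<Longrightarrow> u \<in> leaves T \<Longrightarrow> \<exists>i\<in>{1..nleaves T}. leaf T i = u"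
proof -
  assume t: "is_tree d T" and u: "u \<in> leaves T"
  let ?L = "sorted_list_of_set (leaves T)"
  have "u \<in> set ?L" using u finite_leaves[OF t] by simp
  then obtain j where j: "j < length ?L" "?L ! j = u" by (meson in_set_conv_nth)
  have "Suc j \<in> {1..nleaves T}" using j(1) by (simp add: nleaves_def)
  moreover have "leaf T (Suc j) = u" using j(2) by (simp add: leaf_def)
  ultimately show ?thesis by blast
qed

lemma leaf_T: "is_tree d T \<Longrightarrow> i \<in> {1..nleaves T} \<Longrightarrow> leaf T i \<in> T"
  using leaf_in[of d T i] leaves_sub[of T] by (simp add: subset_iff)

lemma leaf_words: "is_tree d T \<Longrightarrow> i \<in> {1..nleaves T} \<Longrightarrow> leaf T i \<in> words d"
  using leaf_T[of d T i] tree_words[of d T] by simp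

lemma bd_leaf_decomp:
  assumes t: "is_tree d T" and x: "\<xi> \<in> bd d"
  shows "\<exists>i\<in>{1..nleaves T}. \<exists>\<eta>\<in>bd d. \<xi> = bconc (leaf T i) \<eta>"
proof -
  obtain u where u: "u \<in> leaves T" "bprefix u \<xi>" using leaf_bprefix_exists[OF t x] by blast
  obtain i where i: "i \<in> {1..nleaves T}" "leaf T i = u" using leaf_surj[OF t u(1)] by blast
  have "\<xi> = bconc (leaf T i) (\<lambda>j. \<xi> (j + length u))" using i(2) bconc_decomp[OF u(2)] by simp
  then show ?thesis using i(1) shift_bd[OF x] by blast
qed

lemma leaf_index_unique:
  assumes t: "is_tree d T" and i: "i \<in> {1..nleaves T}" and j: "j \<in> {1..nleaves T}"
    and p: "bprefix (leaf T j) (bconc (leaf T i) \<eta>)"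
  shows "j = i"
proof -
  have "leaf T j = leaf T i" using leaf_bprefix_unique[OF t leaf_in[OF t j] leaf_in[OF t i] p bprefix_bconc] .
  then show ?thesis using leaf_inj[OF t j i] by simp
qed


lemma lex_snoc_prefix: "(u::nat list) < u @ [x]"
  unfolding list_less_def lexord_def by auto

lemma lex_snoc: "(x::nat) < y \<Longrightarrow> (l::nat list) @ [x] < l @ [y]"
  unfolding list_less_def lexord_def by auto

lemma lex_nonprefix:
  assumes "(u::nat list) < c" and "\<And>v. c \<noteq> u @ v"
  shows "u @ s < c"
proof -
  have "(u, c) \<in> lexord {(u, v). u < v}" using assms(1) by (simp add: list_less_def)
  then obtain p a b v w where "a < b" "u = p @ a # v" "c = p @ b # w"
    using assms(2) unfolding lexord_def by blast
  then show ?thesis unfolding list_less_def lexord_def by auto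
qed

context
  fixes d :: nat and T :: tree and k :: nat
  assumes t: "is_tree d T" and k: "k \<in> {1..nleaves T}" and d: "d \<ge> 1"
begin

abbreviation "lk \<equiv> leaf T k"
abbreviation "CC \<equiv> {leaf T k @ [x] | x. x \<in> {1..d}}"

lemma lk_leaf: "lk \<in> leaves T" using leaf_in[OF t k] .
lemma lk_T: "lk \<in> T" using leaf_T[OF t k] .
lemma lk_words: "lk \<in> words d" using leaf_words[OF t k] .

lemma add_caret_tree: "is_tree d (add_caret d T k)"
proof -
  have fin: "finite (add_caret d T k)"
  proof -
    have "CC = (\<lambda>x. lk @ [x]) ` {1..d}" by auto
    then show ?thesis using tree_finite[OF t] by (simp add: add_caret_def)
  qed
  have e: "[] \<in> add_caret d T k" using t by (simp add: add_caret_def is_tree_def)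
  have w: "add_caret d T k \<subseteq> words d" using t lk_words by (auto simp: add_caret_def is_tree_def)
  have p: "w \<in> add_caret d T k" if "w @ [x] \<in> add_caret d T k" for w x
  proof -
    have tp: "\<forall>w x. w @ [x] \<in> T \<longrightarrow> w \<in> T" using t unfolding is_tree_def by blast
    show ?thesis using that lk_T tp unfolding add_caret_def by auto
  qed
  have s: "\<forall>y\<in>{1..d}. w @ [y] \<in> add_caret d T k" if "w @ [x] \<in> add_caret d T k" for w x
  proof -
    have ts: "\<forall>w x. w @ [x] \<in> T \<longrightarrow> (\<forall>y\<in>{1..d}. w @ [y] \<in> T)" using t unfolding is_tree_def by blast
    show ?thesis using that ts unfolding add_caret_def by auto
  qed
  show ?thesis unfolding is_tree_def using fin e w p s by blast
qed

lemma leaves_add_caret: "leaves (add_caret d T k) = (leaves T - {lk}) \<union> CC"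
proof -
  have a: "w @ [x] \<notin> T" if "w \<in> CC" for w x
  proof
    assume "w @ [x] \<in> T"
    then have "lk @ [hd (drop (length lk) w)] \<in> T" using that tree_prefix[OF t, of "lk @ [_]" "[x]"] by auto
    then show False using lk_leaf by (simp add: leaves_def)
  qed
  have lkn: "lk \<notin> leaves (add_caret d T k)"
    using d by (auto simp: leaves_def add_caret_def)
  show ?thesis
  proof (rule Set.set_eqI)
    fix w
    show "w \<in> leaves (add_caret d T k) \<longleftrightarrow> w \<in> (leaves T - {lk}) \<union> CC"
    proof (cases "w \<in> CC")
      case True
      then show ?thesis using a[OF True] unfolding leaves_def add_caret_def by auto
    next
      case False
      then show ?thesis using lkn unfolding leaves_def add_caret_def by auto
    qed
  qed
qed

abbreviation "LL \<equiv> sorted_list_of_set (leaves T)"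
abbreviation "BB \<equiv> map (\<lambda>x. lk @ [x]) [1..<d+1]"

lemma LL_len: "length LL = nleaves T" by (simp add: nleaves_def)

lemma LL_split: "LL = take (k - 1) LL @ lk # drop k LL"
proof -
  have "k - 1 < length LL" using k LL_len by auto
  then have "LL = take (k - 1) LL @ LL ! (k - 1) # drop (Suc (k - 1)) LL" by (rule id_take_nth_drop)
  moreover have "Suc (k - 1) = k" using k by auto
  ultimately show ?thesis by (simp add: leaf_def)
qed

lemma sorted_add_caret:
  "sorted_list_of_set (leaves (add_caret d T k)) = take (k - 1) LL @ BB @ drop k LL"
proof -
  let ?A = "take (k - 1) LL" and ?C = "drop k LL"
  have sw: "sorted_wrt (<) LL" by simp
  then have sw2: "sorted_wrt (<) (?A @ lk # ?C)" using LL_split by simp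
  then have sA: "sorted_wrt (<) ?A" and sC: "sorted_wrt (<) ?C" and Al: "\<forall>a\<in>set ?A. a < lk"
    and lC: "\<forall>c\<in>set ?C. lk < c" and AC: "\<forall>a\<in>set ?A. \<forall>c\<in>set ?C. a < c"
    by (auto simp: sorted_wrt_append)
  have sB: "sorted_wrt (<) BB"
    unfolding sorted_wrt_map by (rule sorted_wrt_mono_rel[OF _ sorted_wrt_upt]) (simp add: lex_snoc)
  have AB: "\<forall>a\<in>set ?A. \<forall>b\<in>set BB. a < b"
    using Al lex_snoc_prefix by (auto intro: order.strict_trans)
  have Cleaf: "set ?C \<subseteq> leaves T"
    using LL_split finite_leaves[OF t] by (metis set_drop_subset sorted_list_of_set.set_sorted_key_list_of_set)
  have BC: "\<forall>b\<in>set BB. \<forall>c\<in>set ?C. b < c"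
  proof (intro ballI)
    fix b c assume b: "b \<in> set BB" and c: "c \<in> set ?C"
    obtain x where bx: "b = lk @ [x]" using b by auto
    have lc: "lk < c" using lC c by blast
    have np: "c \<noteq> lk @ v" for v
    proof
      assume cv: "c = lk @ v"
      have "c \<in> T" using c Cleaf leaves_sub by blast
      then have "v = []" using leaf_antichain[OF t lk_leaf] cv by simp
      then show False using cv lc by simp
    qed
    show "b < c" using lex_nonprefix[OF lc np] bx by simp
  qed
  have st: "sorted_wrt (<) (?A @ BB @ ?C)"
    using sA sB sC AB BC AC by (auto simp: sorted_wrt_append)
  have dl: "distinct (?A @ lk # ?C)" using sw2 strict_sorted_iff by blast
  have setL: "set (?A @ lk # ?C) = leaves T" using LL_split finite_leaves[OF t]
    by (metis sorted_list_of_set.set_sorted_key_list_of_set)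
  have "set (?A @ BB @ ?C) = (leaves T - {lk}) \<union> CC"
  proof -
    have "set BB = CC" by auto
    moreover have "set ?A \<union> set ?C = leaves T - {lk}" using dl setL by auto
    ultimately show ?thesis by auto
  qed
  then have "set (?A @ BB @ ?C) = leaves (add_caret d T k)" using leaves_add_caret by simp
  then show ?thesis using st strict_sorted_iff
    by (metis sorted_list_of_set.idem_if_sorted_distinct)
qed

lemma nleaves_add_caret: "nleaves (add_caret d T k) = nleaves T + d - 1"
proof -
  have "nleaves (add_caret d T k) = length (take (k - 1) LL @ BB @ drop k LL)"
    by (simp only: nleaves_len sorted_add_caret)
  also have "\<dots> = (k - 1) + d + (nleaves T - k)" using k LL_len by (auto simp del: upt_Suc simp: min_def)
  also have "\<dots> = nleaves T + d - 1" using k by auto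
  finally show ?thesis .
qed

lemma leaf_add_caret_lo: "1 \<le> i \<Longrightarrow> i < k \<Longrightarrow> leaf (add_caret d T k) i = leaf T i"
proof -
  assume i: "1 \<le> i" "i < k"
  have "length (take (k - 1) LL) = k - 1" using k LL_len by (auto simp: min_def)
  then show ?thesis using i unfolding leaf_def sorted_add_caret by (simp add: nth_append)
qed

lemma leaf_add_caret_mid: "j < d \<Longrightarrow> leaf (add_caret d T k) (k + j) = lk @ [Suc j]"
proof -
  assume j: "j < d"
  have l: "length (take (k - 1) LL) = k - 1" using k LL_len by (auto simp: min_def)
  have e: "k + j - 1 = length (take (k - 1) LL) + j" using k l by auto
  have "leaf (add_caret d T k) (k + j) = (take (k - 1) LL @ BB @ drop k LL) ! (length (take (k - 1) LL) + j)"
    by (simp only: leaf_def sorted_add_caret e)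
  also have "\<dots> = (BB @ drop k LL) ! j" by (rule nth_append_length_plus)
  also have "\<dots> = BB ! j" using j by (simp del: upt_Suc add: nth_append)
  also have "\<dots> = lk @ [Suc j]" using j by (simp del: upt_Suc)
  finally show ?thesis .
qed

lemma leaf_add_caret_hi: "k + d \<le> i \<Longrightarrow> i \<le> nleaves T + d - 1 \<Longrightarrow> leaf (add_caret d T k) i = leaf T (i - d + 1)"
proof -
  assume i: "k + d \<le> i" "i \<le> nleaves T + d - 1"
  have l: "length (take (k - 1) LL) = k - 1" using k LL_len by (auto simp: min_def)
  have lb: "length BB = d" by (simp del: upt_Suc)
  have e: "i - 1 = length (take (k - 1) LL) + (length BB + (i - k - d))" using i k l lb by auto
  have "leaf (add_caret d T k) i = (take (k - 1) LL @ BB @ drop k LL) ! (length (take (k - 1) LL) + (length BB + (i - k - d)))"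
    by (simp only: leaf_def sorted_add_caret e)
  also have "\<dots> = drop k LL ! (i - k - d)" by (simp only: nth_append_length_plus)
  also have "\<dots> = LL ! (i - d)" using i k LL_len by simp
  also have "\<dots> = leaf T (i - d + 1)" using i d by (simp add: leaf_def)
  finally show ?thesis .
qed

lemma add_caret_sup: "T \<subseteq> add_caret d T k"
  by (simp add: add_caret_def)

end


lemma aa_eval:
  assumes t: "is_tree d Tp" and i: "i \<in> {1..nleaves Tp}" and e: "\<eta> \<in> bd d"
  shows "aa d (Tm, (\<sigma>, fs), Tp) (bconc (leaf Tp i) \<eta>) = bconc (leaf Tm (\<sigma> i)) (aut_bd (fs i) \<eta>)"
proof -
  let ?\<xi> = "bconc (leaf Tp i) \<eta>"
  have x: "?\<xi> \<in> bd d" using bconc_bd[OF leaf_words[OF t i] e] .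
  have th: "(THE i'. i' \<in> {1..nleaves Tp} \<and> bprefix (leaf Tp i') ?\<xi>) = i"
  proof (rule the_equality)
    show "i \<in> {1..nleaves Tp} \<and> bprefix (leaf Tp i) ?\<xi>" using i bprefix_bconc by blast
    show "j = i" if "j \<in> {1..nleaves Tp} \<and> bprefix (leaf Tp j) ?\<xi>" for j
      using leaf_index_unique[OF t i, of j \<eta>] that by blast
  qed
  show ?thesis unfolding aa_def prod.case Let_def th bconc_shift using x by simp
qed

lemma aa_out: "\<xi> \<notin> bd d \<Longrightarrow> aa d t \<xi> = \<xi>"
  by (cases t) (auto simp: aa_def)

lemma tripD:
  assumes "(Tm, (\<sigma>, fs), Tp) \<in> trip d G"
  shows "is_tree d Tm" "is_tree d Tp" "nleaves Tm = nleaves Tp" "\<sigma> permutes {1..nleaves Tp}"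
    "\<And>i. i \<in> {1..nleaves Tp} \<Longrightarrow> fs i \<in> G" "\<And>i. i \<notin> {1..nleaves Tp} \<Longrightarrow> fs i = id"
  using assms by (auto simp: trip_def wr_def)

lemma tripI:
  assumes "is_tree d Tm" "is_tree d Tp" "nleaves Tm = nleaves Tp" "(\<sigma>, fs) \<in> wr (nleaves Tp) G"
  shows "(Tm, (\<sigma>, fs), Tp) \<in> trip d G"
  using assms by (auto simp: trip_def)

lemma wrD:
  assumes "(\<sigma>, fs) \<in> wr n G"
  shows "\<sigma> permutes {1..n}" "\<And>i. i \<in> {1..n} \<Longrightarrow> fs i \<in> G" "\<And>i. i \<notin> {1..n} \<Longrightarrow> fs i = id"
  using assms by (auto simp: wr_def)

lemma aa_bd:
  assumes tr: "(Tm, (\<sigma>, fs), Tp) \<in> trip d G" and GA: "G \<subseteq> AutSet d" and x: "\<xi> \<in> bd d"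
  shows "aa d (Tm, (\<sigma>, fs), Tp) \<xi> \<in> bd d"
proof -
  note D = tripD[OF tr]
  obtain i \<eta> where i: "i \<in> {1..nleaves Tp}" and e: "\<eta> \<in> bd d" and xe: "\<xi> = bconc (leaf Tp i) \<eta>"
    using bd_leaf_decomp[OF D(2) x] by blast
  have si: "\<sigma> i \<in> {1..nleaves Tm}" using D(3) permutes_in_image[OF D(4)] i by simp
  have f: "fs i \<in> AutSet d" using D(5)[OF i] GA by blast
  show ?thesis unfolding xe aa_eval[OF D(2) i e]
    using bconc_bd[OF leaf_words[OF D(1) si] aut_bd_bd[OF f e]] .
qed

section \<open>cloning\<close>

lemma shiftperm_permutes:
  assumes r: "\<rho> permutes {1..d}" and k: "1 \<le> k" "k \<le> n"
  shows "shiftperm d k \<rho> permutes {1..n + d - 1}"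
proof -
  have img: "shiftperm d k \<rho> i \<in> {k..<k+d}" if "i \<in> {k..<k+d}" for i
  proof -
    have "i - k + 1 \<in> {1..d}" using that by auto
    then have "\<rho> (i - k + 1) \<in> {1..d}" using permutes_in_image[OF r] by blast
    then show ?thesis using that by (auto simp: shiftperm_def)
  qed
  have inj: "inj_on (shiftperm d k \<rho>) {k..<k+d}"
  proof (rule inj_onI)
    fix a b assume a: "a \<in> {k..<k+d}" and b: "b \<in> {k..<k+d}" and e: "shiftperm d k \<rho> a = shiftperm d k \<rho> b"
    have a1: "a - k + 1 \<in> {1..d}" and b1: "b - k + 1 \<in> {1..d}" using a b by auto
    have "\<rho> (a - k + 1) \<in> {1..d}" "\<rho> (b - k + 1) \<in> {1..d}" using permutes_in_image[OF r] a1 b1 by blast+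
    then have "\<rho> (a - k + 1) = \<rho> (b - k + 1)" using e a b by (auto simp: shiftperm_def) arith
    then have "a - k + 1 = b - k + 1" using permutes_inj[OF r] by (simp add: inj_eq)
    then show "a = b" using a b by auto
  qed
  have "shiftperm d k \<rho> ` {k..<k+d} = {k..<k+d}"
    by (rule endo_inj_surj[OF _ _ inj]) (use img in auto)
  then have "shiftperm d k \<rho> permutes {k..<k+d}"
    using inj by (intro bij_imp_permutes) (auto simp: bij_betw_def shiftperm_def)
  moreover have "{k..<k+d} \<subseteq> {1..n + d - 1}" using k by auto
  ultimately show ?thesis by (rule permutes_subset)
qed

lemma varsigma_permutes:
  assumes s: "\<sigma> permutes {1..n}" and k: "1 \<le> k" "k \<le> n" and d: "d \<ge> 1"
  shows "varsigma d n k \<sigma> permutes {1..n + d - 1}"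
proof -
  let ?v = "varsigma d n k \<sigma>" and ?N = "n + d - 1"
  define sh where "sh = (\<lambda>m. if m < \<sigma> k then m else m + d - 1)"
  have sin: "\<sigma> i \<in> {1..n}" if "i \<in> {1..n}" for i using permutes_in_image[OF s] that by blast
  have sinj: "\<sigma> a = \<sigma> b \<Longrightarrow> a = b" for a b using permutes_inj[OF s] by (simp add: inj_eq)
  have sk: "\<sigma> k \<in> {1..n}" using sin k by simp
  have sne: "a \<noteq> b \<Longrightarrow> \<sigma> a \<noteq> \<sigma> b" for a b using sinj by blast
  have v1: "?v i = sh (\<sigma> i)" if "1 \<le> i" "i < k" for i using that by (simp add: varsigma_def sh_def)
  have v2: "?v i = \<sigma> k + (i - k)" if "k \<le> i" "i < k + d" for i using that by (simp add: varsigma_def)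
  have v3: "?v i = sh (\<sigma> (i - d + 1))" if "k + d \<le> i" "i \<le> ?N" for i using that by (simp add: varsigma_def sh_def)
  have v4: "?v i = i" if "i \<notin> {1..?N}" for i using that k by (auto simp: varsigma_def)
  have shr: "sh m \<in> {1..?N} \<and> (sh m < \<sigma> k \<or> \<sigma> k + d \<le> sh m)" if "m \<in> {1..n}" "m \<noteq> \<sigma> k" for m
    using that d by (auto simp: sh_def)
  have shinj: "sh a = sh b \<Longrightarrow> a \<noteq> \<sigma> k \<Longrightarrow> b \<noteq> \<sigma> k \<Longrightarrow> a = b" for a b
    by (auto simp: sh_def split: if_splits)
  define p where "p = (\<lambda>i. if i < k then i else i - d + 1)"
  have vo: "?v i = sh (\<sigma> (p i)) \<and> p i \<in> {1..n} \<and> \<sigma> (p i) \<noteq> \<sigma> k"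
    if "i \<in> {1..?N}" "\<not> (k \<le> i \<and> i < k + d)" for i
  proof (cases "i < k")
    case True
    then show ?thesis using that v1[of i] k sne[of i k] by (auto simp: p_def)
  next
    case False
    then have "k + d \<le> i" using that by auto
    then show ?thesis using that v3[of i] k d sne[of "i - d + 1" k] by (auto simp: p_def)
  qed
  have pinj: "p a = p b \<Longrightarrow> a \<in> {1..?N} \<Longrightarrow> b \<in> {1..?N} \<Longrightarrow> \<not> (k \<le> a \<and> a < k + d) \<Longrightarrow> \<not> (k \<le> b \<and> b < k + d) \<Longrightarrow> a = b" for a b
    using d by (auto simp: p_def split: if_splits)
  have img: "?v i \<in> {1..?N}" if "i \<in> {1..?N}" for i
  proof (cases "k \<le> i \<and> i < k + d")
    case True
    then show ?thesis using v2[of i] sk by auto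
  next
    case False
    have h: "?v i = sh (\<sigma> (p i))" "p i \<in> {1..n}" "\<sigma> (p i) \<noteq> \<sigma> k" using vo[OF that False] by auto
    show ?thesis using h(1) shr[OF sin[OF h(2)] h(3)] by simp
  qed
  have inj: "inj_on ?v {1..?N}"
  proof (rule inj_onI)
    fix a b assume a: "a \<in> {1..?N}" and b: "b \<in> {1..?N}" and e: "?v a = ?v b"
    show "a = b"
    proof (cases "k \<le> a \<and> a < k + d")
      case True
      note ta = True
      show ?thesis
      proof (cases "k \<le> b \<and> b < k + d")
        case True
        then show ?thesis using e v2[of a] v2[of b] ta by auto
      next
        case False
        have h: "?v b = sh (\<sigma> (p b))" "p b \<in> {1..n}" "\<sigma> (p b) \<noteq> \<sigma> k" using vo[OF b False] by auto
        have "?v b < \<sigma> k \<or> \<sigma> k + d \<le> ?v b" using h(1) shr[OF sin[OF h(2)] h(3)] by simp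
        moreover have "?v a = \<sigma> k + (a - k)" using v2 ta by auto
        ultimately show ?thesis using e ta by linarith
      qed
    next
      case False
      note fa = False
      have va: "?v a = sh (\<sigma> (p a))" "p a \<in> {1..n}" "\<sigma> (p a) \<noteq> \<sigma> k" using vo[OF a fa] by auto
      show ?thesis
      proof (cases "k \<le> b \<and> b < k + d")
        case True
        have "?v a < \<sigma> k \<or> \<sigma> k + d \<le> ?v a" using va(1) shr[OF sin[OF va(2)] va(3)] by simp
        moreover have "?v b = \<sigma> k + (b - k)" using v2 True by auto
        ultimately show ?thesis using e True by linarith
      next
        case False
        have vb: "?v b = sh (\<sigma> (p b))" "p b \<in> {1..n}" "\<sigma> (p b) \<noteq> \<sigma> k" using vo[OF b False] by auto
        have "sh (\<sigma> (p a)) = sh (\<sigma> (p b))" using e va vb by simp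
        then have "\<sigma> (p a) = \<sigma> (p b)" using shinj va(3) vb(3) by blast
        then have "p a = p b" by (rule sinj)
        then show ?thesis using pinj a b fa False by blast
      qed
    qed
  qed
  have "?v ` {1..?N} = {1..?N}"
    by (rule endo_inj_surj[OF _ _ inj]) (use img in auto)
  then have "bij_betw ?v {1..?N} {1..?N}" using inj by (simp add: bij_betw_def)
  then show ?thesis using v4 by (rule bij_imp_permutes)
qed

lemma clone_wr:
  assumes GA: "G \<subseteq> AutSet d" and SS: "self_similar d G" and d: "d \<ge> 1"
    and k: "1 \<le> k" "k \<le> n" and g: "g \<in> wr n G"
  shows "clone d n k g \<in> wr (n + d - 1) G"
proof -
  obtain \<sigma> fs where gg: "g = (\<sigma>, fs)" by (cases g)
  note W = wrD[OF g[unfolded gg]]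
  have fk: "fs k \<in> AutSet d" using W(2)[of k] k GA by auto
  have p1: "shiftperm d k (rootperm d (fs k)) permutes {1..n + d - 1}"
    using shiftperm_permutes[OF rootperm_permutes[OF fk] k] .
  have p2: "varsigma d n k \<sigma> permutes {1..n + d - 1}" using varsigma_permutes[OF W(1) k d] .
  have pc: "varsigma d n k \<sigma> \<circ> shiftperm d k (rootperm d (fs k)) permutes {1..n + d - 1}"
    using permutes_compose[OF p1 p2] .
  let ?F = "\<lambda>i. if 1 \<le> i \<and> i < k then fs i
           else if k \<le> i \<and> i < k + d then sect d (fs k) (i - k + 1)
           else if k + d \<le> i \<and> i \<le> n + d - 1 then fs (i - d + 1)
           else id"
  have inG: "?F i \<in> G" if "i \<in> {1..n + d - 1}" for i
  proof -
    have fkG: "fs k \<in> G" using W(2)[of k] k by auto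
    consider "i < k" | "k \<le> i \<and> i < k + d" | "k + d \<le> i" by linarith
    then show ?thesis
    proof cases
      case 1 then show ?thesis using that k W(2)[of i] by auto
    next
      case 2
      have "i - k + 1 \<in> {1..d}" using 2 by auto
      then have "sect d (fs k) (i - k + 1) \<in> G" using SS fkG unfolding self_similar_def by blast
      then show ?thesis using 2 by auto
    next
      case 3
      have "i - d + 1 \<in> {1..n}" using 3 that k d by auto
      then show ?thesis using 3 that k W(2)[of "i - d + 1"] by auto
    qed
  qed
  have outid: "?F i = id" if "i \<notin> {1..n + d - 1}" for i using that k by auto
  show ?thesis unfolding gg clone_def wr_def using pc inG outid by auto
qed


lemma vs_lo: "1 \<le> i \<Longrightarrow> i < k \<Longrightarrow> varsigma d n k \<sigma> i = (if \<sigma> i < \<sigma> k then \<sigma> i else \<sigma> i + d - 1)"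
  by (simp add: varsigma_def)
lemma vs_mid: "k \<le> i \<Longrightarrow> i < k + d \<Longrightarrow> varsigma d n k \<sigma> i = \<sigma> k + (i - k)"
  by (simp add: varsigma_def)
lemma vs_hi: "1 \<le> k \<Longrightarrow> k + d \<le> i \<Longrightarrow> i \<le> n + d - 1 \<Longrightarrow> varsigma d n k \<sigma> i = (if \<sigma> (i - d + 1) < \<sigma> k then \<sigma> (i - d + 1) else \<sigma> (i - d + 1) + d - 1)"
  by (simp add: varsigma_def Let_def)
lemma sp_out: "\<not> (k \<le> i \<and> i < k + d) \<Longrightarrow> shiftperm d k \<rho> i = i"
  unfolding shiftperm_def by presburger
lemma sp_in: "k \<le> i \<Longrightarrow> i < k + d \<Longrightarrow> shiftperm d k \<rho> i = k + \<rho> (i - k + 1) - 1"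
  by (simp add: shiftperm_def)

lemma sh_leaf:
  assumes t: "is_tree d T" and s: "s \<in> {1..nleaves T}" and m: "m \<in> {1..nleaves T}" and ms: "m \<noteq> s" and d: "d \<ge> 1"
  shows "leaf (add_caret d T s) (if m < s then m else m + d - 1) = leaf T m"
proof (cases "m < s")
  case True
  then show ?thesis using leaf_add_caret_lo[OF t s d, of m] m by simp
next
  case False
  then have "s + d \<le> m + d - 1" "m + d - 1 \<le> nleaves T + d - 1" using ms m d by auto
  then show ?thesis using leaf_add_caret_hi[OF t s d, of "m + d - 1"] False d by simp
qed

definition cloneF :: "nat \<Rightarrow> nat \<Rightarrow> nat \<Rightarrow> (nat \<Rightarrow> autf) \<Rightarrow> nat \<Rightarrow> autf" where
  "cloneF d n k fs = (\<lambda>i. if 1 \<le> i \<and> i < k then fs i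
           else if k \<le> i \<and> i < k + d then sect d (fs k) (i - k + 1)
           else if k + d \<le> i \<and> i \<le> n + d - 1 then fs (i - d + 1)
           else id)"

lemma clone_eq: "clone d n k (\<sigma>, fs) = (varsigma d n k \<sigma> \<circ> shiftperm d k (rootperm d (fs k)), cloneF d n k fs)"
  by (simp add: clone_def cloneF_def)

context
  fixes d :: nat and G :: "autf set"
  assumes GA: "G \<subseteq> AutSet d" and SS: "self_similar d G" and d: "d \<ge> 1"
begin

lemma expand_trip:
  assumes tr: "(Tm, (\<sigma>, fs), Tp) \<in> trip d G" and k: "k \<in> {1..nleaves Tp}"
  shows "(add_caret d Tm (\<sigma> k), clone d (nleaves Tp) k (\<sigma>, fs), add_caret d Tp k) \<in> trip d G"
proof -
  note D = tripD[OF tr]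
  have sk: "\<sigma> k \<in> {1..nleaves Tm}" using D(3) permutes_in_image[OF D(4)] k by simp
  have n1: "nleaves (add_caret d Tm (\<sigma> k)) = nleaves Tm + d - 1" using nleaves_add_caret[OF D(1) sk d] .
  have n2: "nleaves (add_caret d Tp k) = nleaves Tp + d - 1" using nleaves_add_caret[OF D(2) k d] .
  have w: "(\<sigma>, fs) \<in> wr (nleaves Tp) G" using tr by (simp add: trip_def)
  have c: "clone d (nleaves Tp) k (\<sigma>, fs) \<in> wr (nleaves Tp + d - 1) G"
    using clone_wr[OF GA SS d _ _ w] k by auto
  show ?thesis
    using add_caret_tree[OF D(1) sk d] add_caret_tree[OF D(2) k d] n1 n2 D(3) c
    by (auto simp: trip_def)
qed

lemma expand_aa:
  assumes tr: "(Tm, (\<sigma>, fs), Tp) \<in> trip d G" and k: "k \<in> {1..nleaves Tp}"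
  shows "aa d (Tm, (\<sigma>, fs), Tp) = aa d (add_caret d Tm (\<sigma> k), clone d (nleaves Tp) k (\<sigma>, fs), add_caret d Tp k)"
proof
  fix \<xi>
  note D = tripD[OF tr]
  let ?n = "nleaves Tp"
  let ?Tm' = "add_caret d Tm (\<sigma> k)" and ?Tp' = "add_caret d Tp k"
  let ?\<rho> = "rootperm d (fs k)"
  let ?\<sigma>' = "varsigma d ?n k \<sigma> \<circ> shiftperm d k ?\<rho>" and ?F = "cloneF d ?n k fs"
  have sk: "\<sigma> k \<in> {1..nleaves Tm}" using D(3) permutes_in_image[OF D(4)] k by simp
  have sin: "\<sigma> i \<in> {1..nleaves Tm}" if "i \<in> {1..?n}" for i using D(3) permutes_in_image[OF D(4)] that by simp
  have sne: "\<sigma> i \<noteq> \<sigma> k" if "i \<noteq> k" for i using permutes_inj[OF D(4)] that by (metis inj_eq)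
  have fk: "fs k \<in> AutSet d" using D(5)[OF k] GA by blast
  have Tp': "is_tree d ?Tp'" using add_caret_tree[OF D(2) k d] .
  have n2: "nleaves ?Tp' = ?n + d - 1" using nleaves_add_caret[OF D(2) k d] .
  show "aa d (Tm, (\<sigma>, fs), Tp) \<xi> = aa d (?Tm', clone d ?n k (\<sigma>, fs), ?Tp') \<xi>"
  proof (cases "\<xi> \<in> bd d")
    case False
    then show ?thesis by (simp add: aa_out)
  next
    case True
    obtain i \<eta> where i: "i \<in> {1..?n + d - 1}" and e: "\<eta> \<in> bd d" and xe: "\<xi> = bconc (leaf ?Tp' i) \<eta>"
      using bd_leaf_decomp[OF Tp' True] n2 by auto
    have rhs: "aa d (?Tm', clone d ?n k (\<sigma>, fs), ?Tp') \<xi> = bconc (leaf ?Tm' (?\<sigma>' i)) (aut_bd (?F i) \<eta>)"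
      unfolding clone_eq xe using aa_eval[OF Tp' _ e] i n2 by simp
    consider "i < k" | "k \<le> i \<and> i < k + d" | "k + d \<le> i" by linarith
    then show ?thesis
    proof cases
      case 1
      have i1: "i \<in> {1..?n}" and ik: "i \<noteq> k" using 1 i k by auto
      have lp: "leaf ?Tp' i = leaf Tp i" using leaf_add_caret_lo[OF D(2) k d] 1 i by simp
      have sg: "?\<sigma>' i = (if \<sigma> i < \<sigma> k then \<sigma> i else \<sigma> i + d - 1)" using 1 i sp_out[of k i d] vs_lo[of i k] by simp
      have lm: "leaf ?Tm' (?\<sigma>' i) = leaf Tm (\<sigma> i)" unfolding sg using sh_leaf[OF D(1) sk sin[OF i1] sne[OF ik] d] .
      have F: "?F i = fs i" using 1 i by (simp add: cloneF_def)
      show ?thesis unfolding rhs lm F unfolding xe lp using aa_eval[OF D(2) i1 e] by simp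
    next
      case 2
      then obtain j where j: "j < d" "i = k + j" by (metis add_diff_inverse_nat add_less_cancel_left not_less)
      have lp: "leaf ?Tp' i = leaf Tp k @ [Suc j]" using leaf_add_caret_mid[OF D(2) k d j(1)] j(2) by simp
      have sj: "Suc j \<in> {1..d}" using j by simp
      have r: "?\<rho> (Suc j) \<in> {1..d}" using permutes_in_image[OF rootperm_permutes[OF fk]] sj by blast
      have sp: "shiftperm d k ?\<rho> i = k + (?\<rho> (Suc j) - 1)" using sp_in[of k i d ?\<rho>] 2 j r by simp
      have r1: "?\<rho> (Suc j) - 1 < d" using r by auto
      have vm: "varsigma d ?n k \<sigma> (k + (?\<rho> (Suc j) - 1)) = \<sigma> k + (?\<rho> (Suc j) - 1)"
        using vs_mid[of k "k + (?\<rho> (Suc j) - 1)" d ?n \<sigma>] r1 by simp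
      have sg: "?\<sigma>' i = \<sigma> k + (?\<rho> (Suc j) - 1)" using sp vm by simp
      have lm: "leaf ?Tm' (?\<sigma>' i) = leaf Tm (\<sigma> k) @ [?\<rho> (Suc j)]"
        unfolding sg using leaf_add_caret_mid[OF D(1) sk d r1] r by simp
      have F: "?F i = sect d (fs k) (Suc j)" using j by (simp add: cloneF_def)
      have xe2: "\<xi> = bconc (leaf Tp k) (bconc [Suc j] \<eta>)" using xe lp by (simp add: bconc_append)
      have lhs: "aa d (Tm, (\<sigma>, fs), Tp) \<xi> = bconc (leaf Tm (\<sigma> k)) (aut_bd (fs k) (bconc [Suc j] \<eta>))"
        unfolding xe2 using aa_eval[OF D(2) k] e bconc_bd[of "[Suc j]" d \<eta>] sj by simp
      show ?thesis unfolding lhs rhs lm F aut_bd_cons[OF fk sj e] by (simp add: bconc_append)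
    next
      case 3
      let ?i0 = "i - d + 1"
      have i1: "?i0 \<in> {1..?n}" and ik: "?i0 \<noteq> k" using 3 i k d by auto
      have lp: "leaf ?Tp' i = leaf Tp ?i0" using leaf_add_caret_hi[OF D(2) k d] 3 i by simp
      have sg: "?\<sigma>' i = (if \<sigma> ?i0 < \<sigma> k then \<sigma> ?i0 else \<sigma> ?i0 + d - 1)"
        using 3 i sp_out[of k i d] vs_hi[of k d i ?n \<sigma>] k by simp
      have lm: "leaf ?Tm' (?\<sigma>' i) = leaf Tm (\<sigma> ?i0)" unfolding sg using sh_leaf[OF D(1) sk sin[OF i1] sne[OF ik] d] .
      have F: "?F i = fs ?i0" using 3 i k by (simp add: cloneF_def)
      show ?thesis unfolding rhs lm F unfolding xe lp using aa_eval[OF D(2) i1 e] by simp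
    qed
  qed
qed

end


lemma Aut_single: "f \<in> AutSet d \<Longrightarrow> x \<in> {1..d} \<Longrightarrow> f [x] = [rootperm d f x]"
  using AutSetD(2)[of f d "[x]"] by (cases "f [x]") (auto simp: rootperm_def)

lemma aut_bd_0: "f \<in> AutSet d \<Longrightarrow> \<eta> \<in> bd d \<Longrightarrow> aut_bd f \<eta> 0 = rootperm d f (\<eta> 0)"
  using Aut_single[of f d "\<eta> 0"] by (simp add: aut_bd_def bd_def)

lemma bconc_eq_aux:
  assumes d: "d \<ge> 2" and f: "f \<in> AutSet d"
    and eq: "\<And>\<eta>. \<eta> \<in> bd d \<Longrightarrow> bconc u (aut_bd f \<eta>) = bconc u' (aut_bd g \<eta>)"
  shows "\<not> length u < length u'"
proof
  assume l: "length u < length u'"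
  let ?p = "length u"
  have v: "rootperm d f (\<eta> 0) = u' ! ?p" if "\<eta> \<in> bd d" for \<eta>
  proof -
    have "bconc u (aut_bd f \<eta>) ?p = bconc u' (aut_bd g \<eta>) ?p" using eq[OF that] by simp
    then show ?thesis using l aut_bd_0[OF f that] by (simp add: bconc_def)
  qed
  have b1: "(\<lambda>_. 1) \<in> bd d" and b2: "(\<lambda>_. 2) \<in> bd d" using d by (auto simp: bd_def)
  have "rootperm d f 1 = rootperm d f 2" using v[OF b1] v[OF b2] by simp
  moreover have "(1::nat) \<in> {1..d}" "(2::nat) \<in> {1..d}" using d by auto
  ultimately show False using permutes_inj[OF rootperm_permutes[OF f]] by (metis inj_eq numeral_One numeral_eq_iff semiring_norm(85))
qed

lemma bconc_eq_words:
  assumes d: "d \<ge> 2" and f: "f \<in> AutSet d" and g: "g \<in> AutSet d"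
    and eq: "\<And>\<eta>. \<eta> \<in> bd d \<Longrightarrow> bconc u (aut_bd f \<eta>) = bconc u' (aut_bd g \<eta>)"
  shows "u = u'" "\<And>\<eta>. \<eta> \<in> bd d \<Longrightarrow> aut_bd f \<eta> = aut_bd g \<eta>"
proof -
  have "\<not> length u < length u'" using bconc_eq_aux[OF d f eq] .
  moreover have "\<not> length u' < length u" using bconc_eq_aux[OF d g, of u' u f] eq by metis
  ultimately have l: "length u = length u'" by simp
  have b1: "(\<lambda>_. 1) \<in> bd d" using d by (auto simp: bd_def)
  have "u ! j = u' ! j" if "j < length u" for j
  proof -
    have "bconc u (aut_bd f (\<lambda>_. 1)) j = bconc u' (aut_bd g (\<lambda>_. 1)) j" using eq[OF b1] by simp
    then show ?thesis using that l by (simp add: bconc_def)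
  qed
  then show uu: "u = u'" using l by (simp add: list_eq_iff_nth_eq)
  fix \<eta> assume e: "\<eta> \<in> bd d"
  have "(\<lambda>j. bconc u (aut_bd f \<eta>) (j + length u)) = (\<lambda>j. bconc u (aut_bd g \<eta>) (j + length u))"
    using eq[OF e] uu by simp
  then show "aut_bd f \<eta> = aut_bd g \<eta>" by simp
qed

lemma faithful:
  assumes d: "d \<ge> 2"
    and s: "(Tm, (\<sigma>, fs), Tp) \<in> trip d (AutSet d)" and t: "(Sm, (\<tau>, gs), Tp) \<in> trip d (AutSet d)"
    and e: "aa d (Tm, (\<sigma>, fs), Tp) = aa d (Sm, (\<tau>, gs), Tp)"
  shows "(Tm, (\<sigma>, fs), Tp) = (Sm, (\<tau>, gs), Tp)"
proof -
  note S = tripD[OF s] and T = tripD[OF t]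
  let ?n = "nleaves Tp"
  have key: "leaf Tm (\<sigma> i) = leaf Sm (\<tau> i) \<and> fs i = gs i" if i: "i \<in> {1..?n}" for i
  proof -
    have si: "\<sigma> i \<in> {1..nleaves Tm}" using S(3) permutes_in_image[OF S(4)] i by simp
    have ti: "\<tau> i \<in> {1..nleaves Sm}" using T(3) permutes_in_image[OF T(4)] i by simp
    have eq: "bconc (leaf Tm (\<sigma> i)) (aut_bd (fs i) \<eta>) = bconc (leaf Sm (\<tau> i)) (aut_bd (gs i) \<eta>)" if "\<eta> \<in> bd d" for \<eta>
      using aa_eval[OF S(2) i that, of Tm \<sigma> fs] aa_eval[OF T(2) i that, of Sm \<tau> gs] e by simp
    have "leaf Tm (\<sigma> i) = leaf Sm (\<tau> i)" using bconc_eq_words(1)[OF d S(5)[OF i] T(5)[OF i] eq] .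
    moreover have "fs i = gs i"
      using aut_bd_inj[of d "fs i" "gs i"] d S(5)[OF i] T(5)[OF i] bconc_eq_words(2)[OF d S(5)[OF i] T(5)[OF i] eq] by simp
    ultimately show ?thesis by simp
  qed
  have imS: "\<sigma> ` {1..?n} = {1..?n}" using permutes_image[OF S(4)] .
  have imT: "\<tau> ` {1..?n} = {1..?n}" using permutes_image[OF T(4)] .
  have lvT: "leaves Tm = leaf Tm ` {1..?n}"
  proof
    show "leaves Tm \<subseteq> leaf Tm ` {1..?n}" using leaf_surj[OF S(1)] S(3) by fastforce
    show "leaf Tm ` {1..?n} \<subseteq> leaves Tm" using leaf_in[OF S(1)] S(3) by auto
  qed
  have lvS: "leaves Sm = leaf Sm ` {1..?n}"
  proof
    show "leaves Sm \<subseteq> leaf Sm ` {1..?n}" using leaf_surj[OF T(1)] T(3) by fastforce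
    show "leaf Sm ` {1..?n} \<subseteq> leaves Sm" using leaf_in[OF T(1)] T(3) by auto
  qed
  have "leaf Tm ` {1..?n} = (\<lambda>i. leaf Tm (\<sigma> i)) ` {1..?n}" using imS by (metis image_image)
  also have "\<dots> = (\<lambda>i. leaf Sm (\<tau> i)) ` {1..?n}" using key by (intro image_cong) auto
  also have "\<dots> = leaf Sm ` {1..?n}" using imT by (metis image_image)
  finally have "leaves Tm = leaves Sm" using lvT lvS by simp
  then have TS: "Tm = Sm" using tree_eq_leaves[OF S(1) T(1)] by simp
  have st: "\<sigma> i = \<tau> i" for i
  proof (cases "i \<in> {1..?n}")
    case True
    have "\<sigma> i \<in> {1..?n}" "\<tau> i \<in> {1..?n}" using True imS imT by auto
    then show ?thesis using leaf_inj[OF S(1), of "\<sigma> i" "\<tau> i"] key[OF True] TS S(3) by simp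
  next
    case False
    then show ?thesis using permutes_not_in[OF S(4)] permutes_not_in[OF T(4)] by simp
  qed
  have fg: "fs i = gs i" for i
    using key[of i] S(6)[of i] T(6)[of i] by (cases "i \<in> {1..?n}") auto
  show ?thesis using TS st fg by auto
qed

lemma tree_union: "is_tree d U1 \<Longrightarrow> is_tree d U2 \<Longrightarrow> is_tree d (U1 \<union> U2)"
  unfolding is_tree_def by blast

lemma sub_leaves_eq:
  assumes T: "is_tree d T" and U: "is_tree d U" and sub: "T \<subseteq> U" and lv: "\<forall>l\<in>leaves T. l \<in> leaves U"
  shows "T = U"
proof -
  have "u \<in> U \<Longrightarrow> u \<in> T" for u
  proof (induction u rule: rev_induct)
    case Nil then show ?case using T by (simp add: is_tree_def)
  next
    case (snoc c u)
    have uU: "u \<in> U" using tree_prefix[OF U snoc.prems] .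
    then have uT: "u \<in> T" using snoc.IH by blast
    show ?case
    proof (rule ccontr)
      assume nc: "u @ [c] \<notin> T"
      have c: "c \<in> {1..d}" using tree_words[OF U snoc.prems] by simp
      have sib: "\<forall>w x. w @ [x] \<in> T \<longrightarrow> (\<forall>y\<in>{1..d}. w @ [y] \<in> T)" using T unfolding is_tree_def by blast
      have "\<forall>x. u @ [x] \<notin> T" using sib nc c by blast
      then have "u \<in> leaves T" using uT by (simp add: leaves_def)
      then have "u \<in> leaves U" using lv by blast
      then show False using snoc.prems by (simp add: leaves_def)
    qed
  qed
  then show ?thesis using sub by blast
qed

lemma Texp_intro:
  assumes "(Tm, g, Tp) \<in> trip d (AutSet d)" "1 \<le> k" "k \<le> nleaves Tp"
  shows "((Tm, g, Tp), (add_caret d Tm (fst g k), clone d (nleaves Tp) k g, add_caret d Tp k)) \<in> Texp d"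
  using assms unfolding Texp_def by blast

lemma trip_mono: "G \<subseteq> AutSet d \<Longrightarrow> trip d G \<subseteq> trip d (AutSet d)"
  unfolding trip_def wr_def by blast

context
  fixes d :: nat and G :: "autf set"
  assumes GA: "G \<subseteq> AutSet d" and SS: "self_similar d G" and d: "d \<ge> 1"
begin

lemma refine_plus:
  "t \<in> trip d G \<Longrightarrow> is_tree d U \<Longrightarrow> snd (snd t) \<subseteq> U \<Longrightarrow> \<exists>t'. (t, t') \<in> (Texp d)\<^sup>* \<and> t' \<in> trip d G \<and> snd (snd t') = U"
proof (induction "card (U - snd (snd t))" arbitrary: t rule: less_induct)
  case less
  obtain Tm \<sigma> fs Tp where tt: "t = (Tm, (\<sigma>, fs), Tp)" by (cases t) auto
  note tr = less.prems(1)[unfolded tt]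
  note D = tripD[OF tr]
  have sub: "Tp \<subseteq> U" using less.prems(3) tt by simp
  show ?case
  proof (cases "Tp = U")
    case True then show ?thesis using less.prems(1) tt by auto
  next
    case False
    then obtain l where l: "l \<in> leaves Tp" "l \<notin> leaves U" using sub_leaves_eq[OF D(2) less.prems(2) sub] by blast
    have lU: "l \<in> U" using l(1) sub leaves_sub by blast
    then obtain x where "l @ [x] \<in> U" using l(2) by (auto simp: leaves_def)
    moreover have sib: "\<forall>w x. w @ [x] \<in> U \<longrightarrow> (\<forall>y\<in>{1..d}. w @ [y] \<in> U)" using less.prems(2) unfolding is_tree_def by blast
    ultimately have CU: "\<forall>y\<in>{1..d}. l @ [y] \<in> U" by blast
    obtain k where k: "k \<in> {1..nleaves Tp}" "leaf Tp k = l" using leaf_surj[OF D(2) l(1)] by blast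
    let ?t1 = "(add_caret d Tm (\<sigma> k), clone d (nleaves Tp) k (\<sigma>, fs), add_caret d Tp k)"
    have t1: "?t1 \<in> trip d G" using expand_trip[OF GA SS d tr k(1)] .
    have st: "(t, ?t1) \<in> Texp d" using Texp_intro[of Tm "(\<sigma>, fs)" Tp d k] trip_mono[OF GA] tr k(1) tt by auto
    have sub1: "add_caret d Tp k \<subseteq> U" using sub CU k(2) by (auto simp: add_caret_def)
    have l1: "l @ [1] \<in> U - Tp"
    proof -
      have "l @ [1] \<notin> Tp" using l(1) by (simp add: leaves_def)
      then show ?thesis using CU d by auto
    qed
    have "U - add_caret d Tp k \<subset> U - Tp"
      using l1 k(2) d add_caret_sup[of d Tp k] by (auto simp: add_caret_def)
    then have "card (U - add_caret d Tp k) < card (U - Tp)"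
      using tree_finite[OF less.prems(2)] by (meson finite_Diff psubset_card_mono)
    then obtain t' where h: "(?t1, t') \<in> (Texp d)\<^sup>*" "t' \<in> trip d G" "snd (snd t') = U"
      using less.hyps[of ?t1] t1 less.prems(2) sub1 tt by auto
    have "(t, t') \<in> (Texp d)\<^sup>*" using st h(1) by (rule converse_rtrancl_into_rtrancl)
    then show ?thesis using h by blast
  qed
qed

lemma refine_minus:
  "t \<in> trip d G \<Longrightarrow> is_tree d U \<Longrightarrow> fst t \<subseteq> U \<Longrightarrow> \<exists>t'. (t, t') \<in> (Texp d)\<^sup>* \<and> t' \<in> trip d G \<and> fst t' = U"
proof (induction "card (U - fst t)" arbitrary: t rule: less_induct)
  case less
  obtain Tm \<sigma> fs Tp where tt: "t = (Tm, (\<sigma>, fs), Tp)" by (cases t) auto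
  note tr = less.prems(1)[unfolded tt]
  note D = tripD[OF tr]
  have sub: "Tm \<subseteq> U" using less.prems(3) tt by simp
  show ?case
  proof (cases "Tm = U")
    case True then show ?thesis using less.prems(1) tt by auto
  next
    case False
    then obtain l where l: "l \<in> leaves Tm" "l \<notin> leaves U" using sub_leaves_eq[OF D(1) less.prems(2) sub] by blast
    have lU: "l \<in> U" using l(1) sub leaves_sub by blast
    then obtain x where "l @ [x] \<in> U" using l(2) by (auto simp: leaves_def)
    moreover have sib: "\<forall>w x. w @ [x] \<in> U \<longrightarrow> (\<forall>y\<in>{1..d}. w @ [y] \<in> U)" using less.prems(2) unfolding is_tree_def by blast
    ultimately have CU: "\<forall>y\<in>{1..d}. l @ [y] \<in> U" by blast
    obtain j where j: "j \<in> {1..nleaves Tm}" "leaf Tm j = l" using leaf_surj[OF D(1) l(1)] by blast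
    have "j \<in> \<sigma> ` {1..nleaves Tp}" using j(1) D(3) permutes_image[OF D(4)] by simp
    then obtain k where k: "k \<in> {1..nleaves Tp}" "\<sigma> k = j" by blast
    let ?t1 = "(add_caret d Tm (\<sigma> k), clone d (nleaves Tp) k (\<sigma>, fs), add_caret d Tp k)"
    have t1: "?t1 \<in> trip d G" using expand_trip[OF GA SS d tr k(1)] .
    have st: "(t, ?t1) \<in> Texp d" using Texp_intro[of Tm "(\<sigma>, fs)" Tp d k] trip_mono[OF GA] tr k(1) tt by auto
    have sub1: "add_caret d Tm (\<sigma> k) \<subseteq> U" using sub CU k(2) j(2) by (auto simp: add_caret_def)
    have l1: "l @ [1] \<in> U - Tm"
    proof -
      have "l @ [1] \<notin> Tm" using l(1) by (simp add: leaves_def)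
      then show ?thesis using CU d by auto
    qed
    have "U - add_caret d Tm (\<sigma> k) \<subset> U - Tm"
      using l1 k(2) j(2) d add_caret_sup[of d Tm "\<sigma> k"] by (auto simp: add_caret_def)
    then have "card (U - add_caret d Tm (\<sigma> k)) < card (U - Tm)"
      using tree_finite[OF less.prems(2)] by (meson finite_Diff psubset_card_mono)
    then obtain t' where h: "(?t1, t') \<in> (Texp d)\<^sup>*" "t' \<in> trip d G" "fst t' = U"
      using less.hyps[of ?t1] t1 less.prems(2) sub1 tt by auto
    have "(t, t') \<in> (Texp d)\<^sup>*" using st h(1) by (rule converse_rtrancl_into_rtrancl)
    then show ?thesis using h by blast
  qed
qed

end

lemma wmult_eq: "wmult (\<sigma>, fs) (\<tau>, gs) = (\<sigma> \<circ> \<tau>, \<lambda>i. fs (\<tau> i) \<circ> gs i)"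
  by (simp add: wmult_def)

lemma wmult_trip:
  assumes a: "(Tm, (\<sigma>, fs), Tp) \<in> trip d G" and b: "(Tp, (\<tau>, gs), Up) \<in> trip d G"
    and GC: "\<forall>f\<in>G. \<forall>g\<in>G. f \<circ> g \<in> G"
  shows "(Tm, wmult (\<sigma>, fs) (\<tau>, gs), Up) \<in> trip d G"
proof -
  note A = tripD[OF a] and B = tripD[OF b]
  have n: "nleaves Up = nleaves Tp" using B(3) by simp
  have p: "\<sigma> \<circ> \<tau> permutes {1..nleaves Up}" using permutes_compose[OF B(4)] A(4) n by simp
  have g: "fs (\<tau> i) \<circ> gs i \<in> G" if "i \<in> {1..nleaves Up}" for i
  proof -
    have "\<tau> i \<in> {1..nleaves Tp}" using permutes_in_image[OF B(4)] that n by simp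
    then show ?thesis using GC A(5) B(5) that by simp
  qed
  have o: "fs (\<tau> i) \<circ> gs i = id" if "i \<notin> {1..nleaves Up}" for i
    using that permutes_not_in[OF B(4)] A(6) B(6) n by simp
  show ?thesis unfolding wmult_eq using A(1) B(2) A(3) n p g o by (auto simp: trip_def wr_def)
qed

lemma aa_comp:
  assumes a: "(Tm, (\<sigma>, fs), Tp) \<in> trip d (AutSet d)" and b: "(Tp, (\<tau>, gs), Up) \<in> trip d (AutSet d)"
  shows "aa d (Tm, (\<sigma>, fs), Tp) \<circ> aa d (Tp, (\<tau>, gs), Up) = aa d (Tm, wmult (\<sigma>, fs) (\<tau>, gs), Up)"
proof
  fix \<xi>
  note A = tripD[OF a] and B = tripD[OF b]
  show "(aa d (Tm, (\<sigma>, fs), Tp) \<circ> aa d (Tp, (\<tau>, gs), Up)) \<xi> = aa d (Tm, wmult (\<sigma>, fs) (\<tau>, gs), Up) \<xi>"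
  proof (cases "\<xi> \<in> bd d")
    case False then show ?thesis by (simp add: aa_out)
  next
    case True
    obtain i \<eta> where i: "i \<in> {1..nleaves Up}" and e: "\<eta> \<in> bd d" and xe: "\<xi> = bconc (leaf Up i) \<eta>"
      using bd_leaf_decomp[OF B(2) True] by blast
    have ti: "\<tau> i \<in> {1..nleaves Tp}" using permutes_in_image[OF B(4)] i B(3) by simp
    have g: "gs i \<in> AutSet d" using B(5) i by simp
    have f: "fs (\<tau> i) \<in> AutSet d" using A(5) ti by simp
    have "aa d (Tp, (\<tau>, gs), Up) \<xi> = bconc (leaf Tp (\<tau> i)) (aut_bd (gs i) \<eta>)"
      unfolding xe using aa_eval[OF B(2) i e] .
    moreover have "aa d (Tm, (\<sigma>, fs), Tp) (bconc (leaf Tp (\<tau> i)) (aut_bd (gs i) \<eta>))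
        = bconc (leaf Tm (\<sigma> (\<tau> i))) (aut_bd (fs (\<tau> i)) (aut_bd (gs i) \<eta>))"
      using aa_eval[OF A(2) ti aut_bd_bd[OF g e]] .
    moreover have "aa d (Tm, wmult (\<sigma>, fs) (\<tau>, gs), Up) \<xi> = bconc (leaf Tm (\<sigma> (\<tau> i))) (aut_bd (fs (\<tau> i) \<circ> gs i) \<eta>)"
      unfolding wmult_eq xe using aa_eval[OF B(2) i e] by simp
    ultimately show ?thesis using aut_bd_comp[OF f g e] by simp
  qed
qed

lemma aa_ident:
  assumes t: "is_tree d T"
  shows "aa d (T, (id, \<lambda>_. id), T) = id"
proof
  fix \<xi>
  show "aa d (T, (id, \<lambda>_. id), T) \<xi> = id \<xi>"
  proof (cases "\<xi> \<in> bd d")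
    case False then show ?thesis by (simp add: aa_out)
  next
    case True
    obtain i \<eta> where i: "i \<in> {1..nleaves T}" and e: "\<eta> \<in> bd d" and xe: "\<xi> = bconc (leaf T i) \<eta>"
      using bd_leaf_decomp[OF t True] by blast
    show ?thesis unfolding xe using aa_eval[OF t i e, of T id "\<lambda>_. id"] by simp
  qed
qed

lemma tree_root: "is_tree d {[]}"
  by (simp add: is_tree_def)

lemma nleaves_root: "nleaves {[]} = 1"
proof -
  have "leaves {[]} = {[]}" by (auto simp: leaves_def)
  then show ?thesis by (simp add: nleaves_def)
qed

lemma tone_trip: "id \<in> G \<Longrightarrow> tone \<in> trip d G"
  unfolding tone_def trip_def wr_def using tree_root nleaves_root by (auto simp: permutes_id)

lemma aa_tone: "aa d tone = id"
  unfolding tone_def using aa_ident[OF tree_root] .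

definition winv :: "nat \<Rightarrow> nat \<Rightarrow> wel \<Rightarrow> wel" where
  "winv d n g = (case g of (\<sigma>, fs) \<Rightarrow> (inv_into UNIV \<sigma>, \<lambda>i. if i \<in> {1..n} then autinv d (fs (inv_into UNIV \<sigma> i)) else id))"

lemma winv_trip:
  assumes a: "(Tm, (\<sigma>, fs), Tp) \<in> trip d G" and GI: "\<forall>f\<in>G. autinv d f \<in> G"
  shows "(Tp, winv d (nleaves Tp) (\<sigma>, fs), Tm) \<in> trip d G"
proof -
  note A = tripD[OF a]
  have p: "inv_into UNIV \<sigma> permutes {1..nleaves Tm}" using permutes_inv[OF A(4)] A(3) by simp
  have g: "autinv d (fs (inv_into UNIV \<sigma> i)) \<in> G" if "i \<in> {1..nleaves Tp}" for i
    using permutes_in_image[OF permutes_inv[OF A(4)]] that A(5) GI by blast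
  show ?thesis unfolding winv_def using A(1) A(2) A(3) p g by (auto simp: trip_def wr_def)
qed

lemma winv_mult:
  assumes a: "(Tm, (\<sigma>, fs), Tp) \<in> trip d (AutSet d)"
  shows "wmult (winv d (nleaves Tp) (\<sigma>, fs)) (\<sigma>, fs) = (id, \<lambda>_. id)"
proof -
  note A = tripD[OF a]
  have h1: "inv_into UNIV \<sigma> \<circ> \<sigma> = id" using permutes_inv_o(2)[OF A(4)] .
  have h2: "(if \<sigma> i \<in> {1..nleaves Tp} then autinv d (fs (inv_into UNIV \<sigma> (\<sigma> i))) else id) \<circ> fs i = id" for i
  proof (cases "i \<in> {1..nleaves Tp}")
    case True
    then have "\<sigma> i \<in> {1..nleaves Tp}" using permutes_in_image[OF A(4)] by blast
    moreover have "inv_into UNIV \<sigma> (\<sigma> i) = i" using permutes_inverses(2)[OF A(4)] .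
    ultimately show ?thesis using autinv(2)[OF A(5)[OF True]] by simp
  next
    case False
    then have "\<sigma> i \<notin> {1..nleaves Tp}" using permutes_not_in[OF A(4) False] by simp
    then show ?thesis using A(6)[OF False] by (subst if_not_P) auto
  qed
  show ?thesis unfolding winv_def prod.case wmult_eq by (simp only: h1 h2)
qed


definition fib :: "nat \<Rightarrow> (bseq \<Rightarrow> bseq) \<Rightarrow> triple set" where
  "fib d h = {y \<in> trip d (AutSet d). aa d y = h}"

lemma Texp_pres:
  assumes d: "d \<ge> 1" and xy: "(x, y) \<in> Texp d"
  shows "x \<in> trip d (AutSet d) \<and> y \<in> trip d (AutSet d) \<and> aa d x = aa d y"
proof -
  obtain Tm g Tp k where e: "x = (Tm, g, Tp)" "y = (add_caret d Tm (fst g k), clone d (nleaves Tp) k g, add_caret d Tp k)"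
    and tr: "(Tm, g, Tp) \<in> trip d (AutSet d)" and k: "1 \<le> k" "k \<le> nleaves Tp"
    using xy unfolding Texp_def by blast
  obtain \<sigma> fs where g: "g = (\<sigma>, fs)" by (cases g)
  have k1: "k \<in> {1..nleaves Tp}" using k by simp
  show ?thesis
    using e tr g expand_trip[OF subset_refl self_similar_Aut d tr[unfolded g] k1]
      expand_aa[OF subset_refl self_similar_Aut d tr[unfolded g] k1] by simp
qed

lemma Teq_pres:
  assumes d: "d \<ge> 1" and xy: "(x, y) \<in> Teq d" and x: "x \<in> trip d (AutSet d)"
  shows "y \<in> trip d (AutSet d) \<and> aa d y = aa d x"
  using xy[unfolded Teq_def]
proof (induction rule: rtrancl_induct)
  case base then show ?case using x by simp
next
  case (step y z)
  from step.hyps(2) show ?case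
  proof
    assume "(y, z) \<in> Texp d"
    then show ?thesis using Texp_pres[OF d, of y z] step.IH by simp
  next
    assume "(y, z) \<in> (Texp d)\<inverse>"
    then have "(z, y) \<in> Texp d" by simp
    then show ?thesis using Texp_pres[OF d, of z y] step.IH by simp
  qed
qed

lemma Texp_star_Teq:
  assumes "(x, y) \<in> (Texp d)\<^sup>*"
  shows "(x, y) \<in> Teq d" "(y, x) \<in> Teq d"
proof -
  show "(x, y) \<in> Teq d" unfolding Teq_def using rtrancl_mono[of "Texp d" "Texp d \<union> (Texp d)\<inverse>"] assms by blast
  have "(y, x) \<in> ((Texp d)\<inverse>)\<^sup>*" using assms by (simp add: rtrancl_converse)
  then show "(y, x) \<in> Teq d" unfolding Teq_def using rtrancl_mono[of "(Texp d)\<inverse>" "Texp d \<union> (Texp d)\<inverse>"] by blast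
qed

lemma Teq_trans: "(x, y) \<in> Teq d \<Longrightarrow> (y, z) \<in> Teq d \<Longrightarrow> (x, z) \<in> Teq d"
  unfolding Teq_def by (rule rtrancl_trans)

lemma class_eq:
  assumes d: "d \<ge> 2" and x: "x \<in> trip d (AutSet d)"
  shows "Teq d `` {x} = fib d (aa d x)"
proof
  have d1: "d \<ge> 1" using d by simp
  show "Teq d `` {x} \<subseteq> fib d (aa d x)" using Teq_pres[OF d1 _ x] by (auto simp: fib_def)
  show "fib d (aa d x) \<subseteq> Teq d `` {x}"
  proof
    fix y assume "y \<in> fib d (aa d x)"
    then have y: "y \<in> trip d (AutSet d)" and ay: "aa d y = aa d x" by (auto simp: fib_def)
    obtain Xm gx Xp where xx: "x = (Xm, gx, Xp)" by (cases x) auto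
    obtain Ym gy Yp where yy: "y = (Ym, gy, Yp)" by (cases y) auto
    have tX: "is_tree d Xp" and tY: "is_tree d Yp" using x y xx yy by (auto simp: trip_def)
    let ?U = "Xp \<union> Yp"
    have U: "is_tree d ?U" using tree_union[OF tX tY] .
    obtain x' where x': "(x, x') \<in> (Texp d)\<^sup>*" "x' \<in> trip d (AutSet d)" "snd (snd x') = ?U"
      using refine_plus[OF subset_refl self_similar_Aut d1 x U] xx by auto
    obtain y' where y': "(y, y') \<in> (Texp d)\<^sup>*" "y' \<in> trip d (AutSet d)" "snd (snd y') = ?U"
      using refine_plus[OF subset_refl self_similar_Aut d1 y U] yy by auto
    have ax: "aa d x' = aa d x" using Teq_pres[OF d1 Texp_star_Teq(1)[OF x'(1)] x] by simp
    have ay': "aa d y' = aa d y" using Teq_pres[OF d1 Texp_star_Teq(1)[OF y'(1)] y] by simp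
    obtain Am \<sigma> fs where xa: "x' = (Am, (\<sigma>, fs), ?U)" using x'(3) by (cases x') auto
    obtain Bm \<tau> gs where yb: "y' = (Bm, (\<tau>, gs), ?U)" using y'(3) by (cases y') auto
    have "x' = y'" using faithful[OF d x'(2)[unfolded xa] y'(2)[unfolded yb]] ax ay' ay xa yb by simp
    then have "(x', y) \<in> Teq d" using Texp_star_Teq(2)[OF y'(1)] by simp
    then have "(x, y) \<in> Teq d" using Teq_trans[OF Texp_star_Teq(1)[OF x'(1)]] by blast
    then show "y \<in> Teq d `` {x}" by simp
  qed
qed

lemma fib_nonempty: "x \<in> trip d (AutSet d) \<Longrightarrow> x \<in> fib d (aa d x)"
  by (simp add: fib_def)

lemma fib_inj:
  assumes "x \<in> trip d (AutSet d)" "y \<in> trip d (AutSet d)" "fib d (aa d x) = fib d (aa d y)"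
  shows "aa d x = aa d y"
  using assms fib_nonempty[of x d] by (auto simp: fib_def)

lemma Phi_fib: "x \<in> trip d (AutSet d) \<Longrightarrow> Phi d (fib d (aa d x)) = aa d x"
proof -
  assume x: "x \<in> trip d (AutSet d)"
  have "(SOME t. t \<in> fib d (aa d x)) \<in> fib d (aa d x)" using fib_nonempty[OF x] by (rule someI)
  then show ?thesis by (simp add: Phi_def fib_def)
qed

context
  fixes d :: nat and G :: "autf set"
  assumes d: "d \<ge> 2" and GA: "G \<subseteq> AutSet d" and SS: "self_similar d G" and GC: "\<forall>f\<in>G. \<forall>g\<in>G. f \<circ> g \<in> G"
begin

lemma tmult_fib:
  assumes a: "a \<in> trip d G" and b: "b \<in> trip d G"
  shows "\<exists>c\<in>trip d G. aa d c = aa d a \<circ> aa d b \<and> tmult d (fib d (aa d a)) (fib d (aa d b)) = fib d (aa d c)"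
proof -
  have d1: "d \<ge> 1" using d by simp
  have TA: "trip d G \<subseteq> trip d (AutSet d)" using trip_mono[OF GA] .
  obtain Am fa Ap where aa': "a = (Am, fa, Ap)" by (cases a) auto
  obtain Bm fb Bp where bb': "b = (Bm, fb, Bp)" by (cases b) auto
  have tA: "is_tree d Ap" and tB: "is_tree d Bm" using a b aa' bb' by (auto simp: trip_def)
  let ?U = "Ap \<union> Bm"
  have U: "is_tree d ?U" using tree_union[OF tA tB] .
  obtain a' where a': "(a, a') \<in> (Texp d)\<^sup>*" "a' \<in> trip d G" "snd (snd a') = ?U"
    using refine_plus[OF GA SS d1 a U] aa' by auto
  obtain b' where b': "(b, b') \<in> (Texp d)\<^sup>*" "b' \<in> trip d G" "fst b' = ?U"
    using refine_minus[OF GA SS d1 b U] bb' by auto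
  obtain Am' \<sigma> fs where ae: "a' = (Am', (\<sigma>, fs), ?U)" using a'(3) by (cases a') auto
  obtain Bp' \<tau> gs where be: "b' = (?U, (\<tau>, gs), Bp')" using b'(3) by (cases b') auto
  let ?c = "(Am', wmult (\<sigma>, fs) (\<tau>, gs), Bp')"
  have c: "?c \<in> trip d G" using wmult_trip[OF a'(2)[unfolded ae] b'(2)[unfolded be] GC] .
  have aaa: "aa d a' = aa d a" using Teq_pres[OF d1 Texp_star_Teq(1)[OF a'(1)]] a TA by auto
  have aab: "aa d b' = aa d b" using Teq_pres[OF d1 Texp_star_Teq(1)[OF b'(1)]] b TA by auto
  have a2: "(Am', (\<sigma>, fs), ?U) \<in> trip d (AutSet d)" using a'(2) ae TA by blast
  have b2: "(?U, (\<tau>, gs), Bp') \<in> trip d (AutSet d)" using b'(2) be TA by blast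
  have ac: "aa d ?c = aa d a \<circ> aa d b"
    using aa_comp[OF a2 b2] aaa aab ae be by simp
  have "tmult d (fib d (aa d a)) (fib d (aa d b)) = fib d (aa d ?c)"
  proof
    show "tmult d (fib d (aa d a)) (fib d (aa d b)) \<subseteq> fib d (aa d ?c)"
    proof
      fix z assume "z \<in> tmult d (fib d (aa d a)) (fib d (aa d b))"
      then obtain Tm f Tp g Up where f: "(Tm, f, Tp) \<in> fib d (aa d a)" and g: "(Tp, g, Up) \<in> fib d (aa d b)"
        and z: "z \<in> Teq d `` {(Tm, wmult f g, Up)}"
        unfolding tmult_def by blast
      obtain \<sigma>2 fs2 where f2: "f = (\<sigma>2, fs2)" by (cases f)
      obtain \<tau>2 gs2 where g2: "g = (\<tau>2, gs2)" by (cases g)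
      have ft: "(Tm, (\<sigma>2, fs2), Tp) \<in> trip d (AutSet d)" and gt: "(Tp, (\<tau>2, gs2), Up) \<in> trip d (AutSet d)"
        using f g f2 g2 by (auto simp: fib_def)
      have c2: "(Tm, wmult f g, Up) \<in> trip d (AutSet d)"
        using wmult_trip[OF ft gt] comp_Aut f2 g2 by blast
      have "aa d (Tm, wmult f g, Up) = aa d a \<circ> aa d b"
        using aa_comp[OF ft gt] f g f2 g2 by (auto simp: fib_def)
      then show "z \<in> fib d (aa d ?c)" using z class_eq[OF d c2] ac by simp
    qed
    show "fib d (aa d ?c) \<subseteq> tmult d (fib d (aa d a)) (fib d (aa d b))"
    proof
      fix z assume z: "z \<in> fib d (aa d ?c)"
      have cA: "?c \<in> trip d (AutSet d)" using c TA by blast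
      have zc: "z \<in> Teq d `` {?c}" using z class_eq[OF d cA] by simp
      have "a' \<in> fib d (aa d a)" using a'(2) TA aaa by (auto simp: fib_def)
      moreover have "b' \<in> fib d (aa d b)" using b'(2) TA aab by (auto simp: fib_def)
      ultimately show "z \<in> tmult d (fib d (aa d a)) (fib d (aa d b))"
        unfolding tmult_def using zc ae be by blast
    qed
  qed
  then show ?thesis using c ac by blast
qed

end

lemma Aut_closed: "\<forall>f\<in>AutSet d. \<forall>g\<in>AutSet d. f \<circ> g \<in> AutSet d"
  using comp_Aut by blast

lemma carrier_TGrp: "d \<ge> 2 \<Longrightarrow> carrier (TGrp d) = (\<lambda>x. fib d (aa d x)) ` trip d (AutSet d)"
  unfolding TGrp_def quotient_def using class_eq by auto

lemma one_TGrp: "d \<ge> 2 \<Longrightarrow> one (TGrp d) = fib d id"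
  using class_eq[of d tone] tone_trip[of "AutSet d" d] id_Aut aa_tone by (simp add: TGrp_def)

lemma TGrp_mult: "mult (TGrp d) = tmult d"
  by (simp add: TGrp_def)

lemma fib_eq_fun: "h1 = h2 \<Longrightarrow> fib d h1 = fib d h2" by simp

lemma TGrp_group:
  assumes d: "d \<ge> 2"
  shows "group (TGrp d)"
proof -
  note TF = tmult_fib[OF d subset_refl self_similar_Aut Aut_closed]
  note C = carrier_TGrp[OF d]
  show ?thesis
  proof (rule groupI)
    fix x y assume "x \<in> carrier (TGrp d)" "y \<in> carrier (TGrp d)"
    then obtain a b where a: "a \<in> trip d (AutSet d)" "x = fib d (aa d a)" and b: "b \<in> trip d (AutSet d)" "y = fib d (aa d b)"
      using C by auto
    obtain c where "c \<in> trip d (AutSet d)" "tmult d x y = fib d (aa d c)" using TF[OF a(1) b(1)] a b by blast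
    then show "x \<otimes>\<^bsub>TGrp d\<^esub> y \<in> carrier (TGrp d)" using C by (simp add: TGrp_mult)
  next
    show "\<one>\<^bsub>TGrp d\<^esub> \<in> carrier (TGrp d)"
      using one_TGrp[OF d] C tone_trip[of "AutSet d" d] id_Aut aa_tone by (metis image_eqI)
  next
    fix x y z assume "x \<in> carrier (TGrp d)" "y \<in> carrier (TGrp d)" "z \<in> carrier (TGrp d)"
    then obtain a b e where a: "a \<in> trip d (AutSet d)" "x = fib d (aa d a)" and b: "b \<in> trip d (AutSet d)" "y = fib d (aa d b)"
      and e: "e \<in> trip d (AutSet d)" "z = fib d (aa d e)"
      using C by auto
    obtain c1 where c1: "c1 \<in> trip d (AutSet d)" "aa d c1 = aa d a \<circ> aa d b" "tmult d x y = fib d (aa d c1)"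
      using TF[OF a(1) b(1)] a b by blast
    obtain c2 where c2: "c2 \<in> trip d (AutSet d)" "aa d c2 = aa d c1 \<circ> aa d e" "tmult d (fib d (aa d c1)) z = fib d (aa d c2)"
      using TF[OF c1(1) e(1)] e by blast
    obtain c3 where c3: "c3 \<in> trip d (AutSet d)" "aa d c3 = aa d b \<circ> aa d e" "tmult d y z = fib d (aa d c3)"
      using TF[OF b(1) e(1)] b e by blast
    obtain c4 where c4: "c4 \<in> trip d (AutSet d)" "aa d c4 = aa d a \<circ> aa d c3" "tmult d x (fib d (aa d c3)) = fib d (aa d c4)"
      using TF[OF a(1) c3(1)] a by blast
    have "aa d c2 = aa d c4" using c1 c2 c3 c4 by (simp add: comp_assoc)
    then show "x \<otimes>\<^bsub>TGrp d\<^esub> y \<otimes>\<^bsub>TGrp d\<^esub> z = x \<otimes>\<^bsub>TGrp d\<^esub> (y \<otimes>\<^bsub>TGrp d\<^esub> z)"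
      using c1 c2 c3 c4 by (simp add: TGrp_mult)
  next
    fix x assume "x \<in> carrier (TGrp d)"
    then obtain a where a: "a \<in> trip d (AutSet d)" "x = fib d (aa d a)" using C by auto
    have t: "tone \<in> trip d (AutSet d)" using tone_trip[of "AutSet d" d] id_Aut by simp
    obtain c where c: "c \<in> trip d (AutSet d)" "aa d c = aa d tone \<circ> aa d a" "tmult d (fib d (aa d tone)) x = fib d (aa d c)"
      using TF[OF t a(1)] a by blast
    show "\<one>\<^bsub>TGrp d\<^esub> \<otimes>\<^bsub>TGrp d\<^esub> x = x" using c a one_TGrp[OF d] aa_tone by (simp add: TGrp_mult)
  next
    fix x assume "x \<in> carrier (TGrp d)"
    then obtain a where a: "a \<in> trip d (AutSet d)" "x = fib d (aa d a)" using C by auto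
    obtain Am \<sigma> fs Ap where ae: "a = (Am, (\<sigma>, fs), Ap)" by (cases a) auto
    let ?b = "(Ap, winv d (nleaves Ap) (\<sigma>, fs), Am)"
    have b: "?b \<in> trip d (AutSet d)" using winv_trip[OF a(1)[unfolded ae]] autinv(1) by blast
    obtain Bm \<tau> gs Bp where be: "winv d (nleaves Ap) (\<sigma>, fs) = (\<tau>, gs)" by (cases "winv d (nleaves Ap) (\<sigma>, fs)") auto
    have "aa d ?b \<circ> aa d a = aa d (Ap, wmult (winv d (nleaves Ap) (\<sigma>, fs)) (\<sigma>, fs), Ap)"
      using aa_comp[of Ap \<tau> gs Am d \<sigma> fs Ap] b be a(1) ae by simp
    also have "\<dots> = id" using winv_mult[OF a(1)[unfolded ae]] aa_ident a(1) ae by (auto simp: trip_def)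
    finally have inv: "aa d ?b \<circ> aa d a = id" .
    obtain c where c: "c \<in> trip d (AutSet d)" "aa d c = aa d ?b \<circ> aa d a" "tmult d (fib d (aa d ?b)) x = fib d (aa d c)"
      using TF[OF b a(1)] a by blast
    have "fib d (aa d ?b) \<in> carrier (TGrp d)" using C b by blast
    moreover have "fib d (aa d ?b) \<otimes>\<^bsub>TGrp d\<^esub> x = \<one>\<^bsub>TGrp d\<^esub>"
      using c inv one_TGrp[OF d] by (simp add: TGrp_mult)
    ultimately show "\<exists>y\<in>carrier (TGrp d). y \<otimes>\<^bsub>TGrp d\<^esub> x = \<one>\<^bsub>TGrp d\<^esub>" by blast
  qed
qed


lemma inv_triple:
  assumes a: "a \<in> trip d H" and HA: "H \<subseteq> AutSet d" and HI: "\<forall>f\<in>H. autinv d f \<in> H"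
  shows "\<exists>b\<in>trip d H. aa d b \<circ> aa d a = id"
proof -
  obtain Am \<sigma> fs Ap where ae: "a = (Am, (\<sigma>, fs), Ap)" by (cases a) auto
  have aA: "(Am, (\<sigma>, fs), Ap) \<in> trip d (AutSet d)" using a ae trip_mono[OF HA] by blast
  let ?b = "(Ap, winv d (nleaves Ap) (\<sigma>, fs), Am)"
  have b: "?b \<in> trip d H" using winv_trip[OF a[unfolded ae] HI] .
  have bA: "?b \<in> trip d (AutSet d)" using b trip_mono[OF HA] by blast
  obtain \<tau> gs where be: "winv d (nleaves Ap) (\<sigma>, fs) = (\<tau>, gs)" by (cases "winv d (nleaves Ap) (\<sigma>, fs)") auto
  have "aa d ?b \<circ> aa d a = aa d (Ap, wmult (winv d (nleaves Ap) (\<sigma>, fs)) (\<sigma>, fs), Ap)"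
    using aa_comp[of Ap \<tau> gs Am d \<sigma> fs Ap] bA be aA ae by simp
  also have "\<dots> = id" using winv_mult[OF aA] aa_ident aA by (auto simp: trip_def)
  finally show ?thesis using b by blast
qed

theorem mainTheorem2:
  fixes d :: nat and G :: "autf set"
  assumes "d \<ge> 2"
    and "subgroup G (AutGrp d)"
    and "self_similar d G"
  shows "(\<forall>n k g. 1 \<le> k \<and> k \<le> n \<and> g \<in> wr n G \<longrightarrow> clone d n k g \<in> wr (n + d - 1) G)
       \<and> group (TGrp d)
       \<and> subgroup (TS d G) (TGrp d)
       \<and> (\<forall>A\<in>carrier (TGrp d). \<forall>s\<in>A. \<forall>t\<in>A. aa d s = aa d t)
       \<and> Phi d \<in> iso ((TGrp d)\<lparr>carrier := TS d G\<rparr>) (VGrp d G)"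
proof -
  have d: "d \<ge> 2" and d1: "d \<ge> 1" using assms(1) by auto
  note sg = assms(2) and SS = assms(3)
  have GA: "G \<subseteq> AutSet d" using subgroup.subset[OF sg] by (simp add: AutGrp_def)
  have GC: "\<forall>f\<in>G. \<forall>g\<in>G. f \<circ> g \<in> G" using subgroup.m_closed[OF sg] by (simp add: AutGrp_def)
  have Gid: "id \<in> G" using subgroup.one_closed[OF sg] by (simp add: AutGrp_def)
  have GI: "\<forall>f\<in>G. autinv d f \<in> G"
  proof
    fix f assume f: "f \<in> G"
    have "inv\<^bsub>AutGrp d\<^esub> f \<in> G" using subgroup.m_inv_closed[OF sg f] .
    moreover have "inv\<^bsub>AutGrp d\<^esub> f = autinv d f" using AutGrp_inv[of f d] f GA by blast
    ultimately show "autinv d f \<in> G" by simp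
  qed
  have TA: "trip d G \<subseteq> trip d (AutSet d)" using trip_mono[OF GA] .
  note grp = TGrp_group[OF d]
  note C = carrier_TGrp[OF d]
  have TSeq: "TS d G = (\<lambda>x. fib d (aa d x)) ` trip d G"
    unfolding TS_def
  proof (rule image_cong[OF refl])
    fix x assume "x \<in> trip d G"
    then have "x \<in> trip d (AutSet d)" using TA by blast
    then show "Teq d `` {x} = fib d (aa d x)" by (rule class_eq[OF d])
  qed
  note TF = tmult_fib[OF d GA SS GC]
  have c1: "\<forall>n k g. 1 \<le> k \<and> k \<le> n \<and> g \<in> wr n G \<longrightarrow> clone d n k g \<in> wr (n + d - 1) G"
    using clone_wr[OF GA SS d1] by blast
  have TSsub: "TS d G \<subseteq> carrier (TGrp d)" using TSeq C TA by auto
  have c3: "subgroup (TS d G) (TGrp d)"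
  proof (rule group.subgroupI[OF grp TSsub])
    show "TS d G \<noteq> {}" using TSeq tone_trip[OF Gid] by blast
  next
    fix A assume "A \<in> TS d G"
    then obtain a where a: "a \<in> trip d G" "A = fib d (aa d a)" using TSeq by auto
    obtain b where b: "b \<in> trip d G" "aa d b \<circ> aa d a = id" using inv_triple[OF a(1) GA GI] by blast
    obtain c where c: "c \<in> trip d G" "aa d c = aa d b \<circ> aa d a" "tmult d (fib d (aa d b)) (fib d (aa d a)) = fib d (aa d c)"
      using TF[OF b(1) a(1)] by blast
    have "fib d (aa d b) \<otimes>\<^bsub>TGrp d\<^esub> A = \<one>\<^bsub>TGrp d\<^esub>"
      using c b a one_TGrp[OF d] by (simp add: TGrp_mult)
    moreover have "A \<in> carrier (TGrp d)" "fib d (aa d b) \<in> carrier (TGrp d)"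
      using a b TA C by auto
    ultimately have "inv\<^bsub>TGrp d\<^esub> A = fib d (aa d b)" using group.inv_equality[OF grp] by blast
    then show "inv\<^bsub>TGrp d\<^esub> A \<in> TS d G" using TSeq b by auto
  next
    fix A B assume "A \<in> TS d G" "B \<in> TS d G"
    then obtain a b where a: "a \<in> trip d G" "A = fib d (aa d a)" and b: "b \<in> trip d G" "B = fib d (aa d b)"
      using TSeq by auto
    obtain c where c: "c \<in> trip d G" "tmult d A B = fib d (aa d c)" using TF[OF a(1) b(1)] a b by blast
    then show "A \<otimes>\<^bsub>TGrp d\<^esub> B \<in> TS d G" using TSeq by (simp add: TGrp_mult)
  qed
  have c4: "\<forall>A\<in>carrier (TGrp d). \<forall>s\<in>A. \<forall>t\<in>A. aa d s = aa d t"
    using C by (auto simp: fib_def)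
  have c5: "Phi d \<in> iso ((TGrp d)\<lparr>carrier := TS d G\<rparr>) (VGrp d G)"
  proof -
    have PhiA: "Phi d A = aa d a" if "a \<in> trip d G" "A = fib d (aa d a)" for A a
      using Phi_fib[of a d] that TA by blast
    have hom: "Phi d \<in> hom ((TGrp d)\<lparr>carrier := TS d G\<rparr>) (VGrp d G)"
    proof (unfold hom_def, intro CollectI conjI ballI)
      show "Phi d \<in> carrier ((TGrp d)\<lparr>carrier := TS d G\<rparr>) \<rightarrow> carrier (VGrp d G)"
        using TSeq PhiA by (auto simp: VGrp_def Vd_def)
    next
      fix A B assume "A \<in> carrier ((TGrp d)\<lparr>carrier := TS d G\<rparr>)" "B \<in> carrier ((TGrp d)\<lparr>carrier := TS d G\<rparr>)"
      then obtain a b where a: "a \<in> trip d G" "A = fib d (aa d a)" and b: "b \<in> trip d G" "B = fib d (aa d b)"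
        using TSeq by auto
      obtain c where c: "c \<in> trip d G" "aa d c = aa d a \<circ> aa d b" "tmult d A B = fib d (aa d c)"
        using TF[OF a(1) b(1)] a b by blast
      show "Phi d (A \<otimes>\<^bsub>(TGrp d)\<lparr>carrier := TS d G\<rparr>\<^esub> B) = Phi d A \<otimes>\<^bsub>VGrp d G\<^esub> Phi d B"
        using c PhiA[OF a] PhiA[OF b] PhiA[OF c(1) refl] by (simp add: TGrp_def VGrp_def)
    qed
    have bij: "bij_betw (Phi d) (TS d G) (Vd d G)"
    proof (unfold bij_betw_def, intro conjI)
      show "inj_on (Phi d) (TS d G)"
      proof (rule inj_onI)
        fix A B assume "A \<in> TS d G" "B \<in> TS d G" and e: "Phi d A = Phi d B"
        then obtain a b where a: "a \<in> trip d G" "A = fib d (aa d a)" and b: "b \<in> trip d G" "B = fib d (aa d b)"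
          using TSeq by auto
        show "A = B" using e PhiA[OF a] PhiA[OF b] a b by simp
      qed
      have "Phi d ` ((\<lambda>x. fib d (aa d x)) ` trip d G) = (\<lambda>x. Phi d (fib d (aa d x))) ` trip d G"
        by (simp add: image_image)
      also have "\<dots> = aa d ` trip d G"
      proof (rule image_cong[OF refl])
        fix x assume "x \<in> trip d G"
        then show "Phi d (fib d (aa d x)) = aa d x" using PhiA by blast
      qed
      finally show "Phi d ` TS d G = Vd d G" unfolding TSeq Vd_def .
    qed
    show ?thesis using hom bij by (simp add: iso_def VGrp_def)
  qed
  show ?thesis using c1 grp c3 c4 c5 by blast
qed


end
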